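(* Let $(S,\mathcal C)$ be a connected connectoid and $T$ a normal tree of $(S,\mathcal C)$ rooted at $r$. Suppose every component in $\mathcal K(S\setminus V(T))$ has finite adhesion to $V(T)$. For every $K\in\mathcal K(S\setminus V(T))$ let $T_K$ be a (possibly empty) normal tree of the induced subconnectoid on $K$. Then there is a normal tree $T'$ of $(S,\mathcal C)$ rooted at $r$ with $T\subseteq T'$ such that $T'-T$ is the disjoint union of the trees $T_K$, $K\in\mathcal K(S\setminus V(T))$. Furthermore, if $T$ and all $T_K$ are rayless, then $T'$ is rayless.
   Context: A connectoid is given by a set $S$ and a set $\mathcal F$ of finite subsets of $S$ such that (i) $F\cup F'\in\mathcal F$ whenever $F,F'\in\mathcal F$ and $F\cap F'\neq\emptyset$, and (ii) $\emptyset\in\mathcal F$ and $\{s\}\in\mathcal F$ for every $s\in S$. A set $C\subseteq S$ is connected if for all $x,y\in C$ there is $F\in\mathcal F$ with $F\subseteq C$ and $x,y\in F$; $\mathcal C$ is the set of connected sets; $(S,\mathcal C)$ is connected if $S\in\mathcal C$. For $S'\subseteq S$, a component of $S'$ is a maximal connected subset, $\mathcal K(S')$ is the set of components, and the induced subconnectoid on $S'$ is $(S',\mathcal C\cap\mathcal P(S'))$. A component $K\in\mathcal K(S\setminus\hat S)$ has finite adhesion to $\hat S$ if there is a finite $X\subseteq\hat S$ with $K\in\mathcal K(S\setminus X)$. A necklace is a connected set $N$ for which there is a family $(H_n)_{n\in\mathbb N}$ of finite connected sets with $N=\bigcup_n H_n$ and $H_i\cap H_j\neq\emptyset$ iff $|i-j|\le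 1$. For a rooted tree $T$ with tree order $\le_T$ and $t\in V(T)$, let $\mathrm{Down}^\circ_T(t)=\{x\in V(T):x<_T t\}$. A weak normal tree of $(S,\mathcal C)$ is a rooted undirected tree $T$ with $V(T)\subseteq S$ such that (1) for every $C\in\mathcal C$ and every two $\le_T$-incomparable $u,v\in C\cap V(T)$ there is $w\in C$ with $w\le_T u$ and $w\le_T v$, and (2) for all $u\le_T v$ in $V(T)$ there is $C\in\mathcal C$ containing $u,v$ with $C\cap\mathrm{Down}^\circ_T(u)=\emptyset$. It is a normal tree if moreover for every rooted ray $R$ of $T$ some necklace contains all but finitely many vertices of $R$. A tree is rayless if it contains no ray. *)

theory Defs
  imports Main
begin

definition connectoid :: "'a set \<Rightarrow> 'a set set \<Rightarrow> bool" where
  "connectoid S F \<longleftrightarrow>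
     (\<forall>X\<in>F. X \<subseteq> S \<and> finite X) \<and>
     (\<forall>X\<in>F. \<forall>Y\<in>F. X \<inter> Y \<noteq> {} \<longrightarrow> X \<union> Y \<in> F) \<and>
     {} \<in> F \<and> (\<forall>s\<in>S. {s} \<in> F)"

definition conn_sets :: "'a set \<Rightarrow> 'a set set \<Rightarrow> 'a set set" where
  "conn_sets S F = {C. C \<subseteq> S \<and> (\<forall>x\<in>C. \<forall>y\<in>C. \<exists>X\<in>F. X \<subseteq> C \<and> x \<in> X \<and> y \<in> X)}"

definition components :: "'a set set \<Rightarrow> 'a set \<Rightarrow> 'a set set" where
  "components CC X = {K. K \<noteq> {} \<and> K \<subseteq> X \<and> K \<in> CC \<and>
       (\<forall>K'. K \<subseteq> K' \<and> K' \<subseteq> X \<and> K' \<in> CC \<longrightarrow> K' = K)}"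

definition finite_adhesion :: "'a set set \<Rightarrow> 'a set \<Rightarrow> 'a set \<Rightarrow> 'a set \<Rightarrow> bool" where
  "finite_adhesion CC S Shat K \<longleftrightarrow>
     (\<exists>X. X \<subseteq> Shat \<and> finite X \<and> K \<in> components CC (S - X))"

definition necklace :: "'a set set \<Rightarrow> 'a set \<Rightarrow> bool" where
  "necklace CC N \<longleftrightarrow> N \<in> CC \<and>
     (\<exists>H :: nat \<Rightarrow> 'a set. N = (\<Union>n. H n) \<and> (\<forall>n. finite (H n) \<and> H n \<in> CC) \<and>
        (\<forall>i j. H i \<inter> H j \<noteq> {} \<longleftrightarrow> (i \<le> j + 1 \<and> j \<le> i + 1)))"

definition ugraph :: "'a set \<Rightarrow> 'a set set \<Rightarrow> bool" where
  "ugraph V E \<longleftrightarrow> (\<forall>e\<in>E. \<exists>x y. x \<noteq> y \<and> x \<in> V \<and> y \<in> V \<and> e = {x, y})"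

definition gpath :: "'a set \<Rightarrow> 'a set set \<Rightarrow> 'a list \<Rightarrow> bool" where
  "gpath V E p \<longleftrightarrow> p \<noteq> [] \<and> distinct p \<and> set p \<subseteq> V \<and>
     (\<forall>i. Suc i < length p \<longrightarrow> {p ! i, p ! Suc i} \<in> E)"

definition gcycle :: "'a set \<Rightarrow> 'a set set \<Rightarrow> 'a list \<Rightarrow> bool" where
  "gcycle V E p \<longleftrightarrow> gpath V E p \<and> length p \<ge> 3 \<and> {last p, hd p} \<in> E"

definition is_tree :: "'a set \<Rightarrow> 'a set set \<Rightarrow> bool" where
  "is_tree V E \<longleftrightarrow> ugraph V E \<and> V \<noteq> {} \<and>
     (\<forall>x\<in>V. \<forall>y\<in>V. \<exists>p. gpath V E p \<and> hd p = x \<and> last p = y) \<and>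
     (\<nexists>p. gcycle V E p)"

definition rooted_tree :: "'a set \<Rightarrow> 'a set set \<Rightarrow> 'a \<Rightarrow> bool" where
  "rooted_tree V E r \<longleftrightarrow> is_tree V E \<and> r \<in> V"

definition tree_le :: "'a set \<Rightarrow> 'a set set \<Rightarrow> 'a \<Rightarrow> 'a \<Rightarrow> 'a \<Rightarrow> bool" where
  "tree_le V E r x y \<longleftrightarrow> (\<exists>p. gpath V E p \<and> hd p = r \<and> last p = y \<and> x \<in> set p)"

definition down_open :: "'a set \<Rightarrow> 'a set set \<Rightarrow> 'a \<Rightarrow> 'a \<Rightarrow> 'a set" where
  "down_open V E r t = {x\<in>V. tree_le V E r x t \<and> x \<noteq> t}"

definition is_ray :: "'a set \<Rightarrow> 'a set set \<Rightarrow> (nat \<Rightarrow> 'a) \<Rightarrow> bool" where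
  "is_ray V E R \<longleftrightarrow> inj R \<and> range R \<subseteq> V \<and> (\<forall>n. {R n, R (Suc n)} \<in> E)"

definition rooted_ray :: "'a set \<Rightarrow> 'a set set \<Rightarrow> 'a \<Rightarrow> (nat \<Rightarrow> 'a) \<Rightarrow> bool" where
  "rooted_ray V E r R \<longleftrightarrow> is_ray V E R \<and> R 0 = r"

definition rayless :: "'a set \<Rightarrow> 'a set set \<Rightarrow> bool" where
  "rayless V E \<longleftrightarrow> (\<nexists>R. is_ray V E R)"

definition weak_normal_tree :: "'a set \<Rightarrow> 'a set set \<Rightarrow> 'a set \<Rightarrow> 'a set set \<Rightarrow> 'a \<Rightarrow> bool" where
  "weak_normal_tree S CC V E r \<longleftrightarrow> rooted_tree V E r \<and> V \<subseteq> S \<and>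
     (\<forall>C\<in>CC. \<forall>u\<in>C \<inter> V. \<forall>v\<in>C \<inter> V.
         \<not> tree_le V E r u v \<and> \<not> tree_le V E r v u \<longrightarrow>
         (\<exists>w\<in>C. tree_le V E r w u \<and> tree_le V E r w v)) \<and>
     (\<forall>u\<in>V. \<forall>v\<in>V. tree_le V E r u v \<longrightarrow>
         (\<exists>C\<in>CC. u \<in> C \<and> v \<in> C \<and> C \<inter> down_open V E r u = {}))"

definition normal_tree :: "'a set \<Rightarrow> 'a set set \<Rightarrow> 'a set \<Rightarrow> 'a set set \<Rightarrow> 'a \<Rightarrow> bool" where
  "normal_tree S CC V E r \<longleftrightarrow> weak_normal_tree S CC V E r \<and>
     (\<forall>R. rooted_ray V E r R \<longrightarrow> (\<exists>N. necklace CC N \<and> finite {n. R n \<notin> N}))"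

end

theory Submission
  imports Defs
begin


fun walk :: "'a set set \<Rightarrow> 'a list \<Rightarrow> bool" where
  "walk E (x # y # xs) = ({x, y} \<in> E \<and> walk E (y # xs))"
| "walk E _ = True"

lemma walk_Cons: "walk E (x # xs) \<longleftrightarrow> walk E xs \<and> (xs \<noteq> [] \<longrightarrow> {x, hd xs} \<in> E)"
  by (cases xs) auto

lemma walk_iff: "walk E p \<longleftrightarrow> (\<forall>i. Suc i < length p \<longrightarrow> {p!i, p!Suc i} \<in> E)"
proof (induction E p rule: walk.induct)
  case (1 E x y xs)
  show ?case
  proof
    assume "walk E (x # y # xs)"
    then show "\<forall>i. Suc i < length (x # y # xs) \<longrightarrow> {(x # y # xs) ! i, (x # y # xs) ! Suc i} \<in> E"
      using 1 by (auto simp: less_Suc_eq_0_disj nth_Cons split: nat.splits)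
  next
    assume H: "\<forall>i. Suc i < length (x # y # xs) \<longrightarrow> {(x # y # xs) ! i, (x # y # xs) ! Suc i} \<in> E"
    have a: "{x,y} \<in> E" using H[rule_format, of 0] by simp
    have "\<forall>i. Suc i < length (y # xs) \<longrightarrow> {(y # xs) ! i, (y # xs) ! Suc i} \<in> E"
      using H[rule_format, of "Suc _"] by auto
    then show "walk E (x # y # xs)" using a 1 by simp
  qed
qed auto

lemma walk_append: "walk E (xs @ ys) \<longleftrightarrow> walk E xs \<and> walk E ys \<and> (xs \<noteq> [] \<and> ys \<noteq> [] \<longrightarrow> {last xs, hd ys} \<in> E)"
  by (induction xs) (auto simp: walk_Cons)

lemma walk_rev: "walk E (rev xs) \<longleftrightarrow> walk E xs"
  by (induction xs) (auto simp: walk_append walk_Cons last_rev insert_commute)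

lemma walk_mono: "walk E p \<Longrightarrow> E \<subseteq> E' \<Longrightarrow> walk E' p"
  by (induction E p rule: walk.induct) auto

lemma gpath_walk: "gpath V E p \<longleftrightarrow> p \<noteq> [] \<and> distinct p \<and> set p \<subseteq> V \<and> walk E p"
  unfolding gpath_def walk_iff by auto

lemma gpath_rev: "gpath V E p \<Longrightarrow> gpath V E (rev p)"
  by (auto simp: gpath_walk walk_rev)

lemma gpath_append: "gpath V E (xs @ ys) \<longleftrightarrow> (xs = [] \<and> gpath V E ys) \<or> (ys = [] \<and> gpath V E xs) \<or>
   (gpath V E xs \<and> gpath V E ys \<and> set xs \<inter> set ys = {} \<and> {last xs, hd ys} \<in> E)"
  by (auto simp: gpath_walk walk_append)

lemma gpath_appendI: "gpath V E xs \<Longrightarrow> gpath V E ys \<Longrightarrow> set xs \<inter> set ys = {} \<Longrightarrow> {last xs, hd ys} \<in> E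
  \<Longrightarrow> gpath V E (xs @ ys)"
  by (auto simp: gpath_append)

lemma gpath_prefix: "gpath V E (xs @ ys) \<Longrightarrow> xs \<noteq> [] \<Longrightarrow> gpath V E xs"
  by (auto simp: gpath_walk walk_append)

lemma gpath_suffix: "gpath V E (xs @ ys) \<Longrightarrow> ys \<noteq> [] \<Longrightarrow> gpath V E ys"
  by (auto simp: gpath_walk walk_append)

lemma gpath_mono: "gpath V E p \<Longrightarrow> V \<subseteq> V' \<Longrightarrow> E \<subseteq> E' \<Longrightarrow> gpath V' E' p"
  by (auto simp: gpath_walk intro: walk_mono)

lemma distinct_hd_last: "distinct q \<Longrightarrow> q \<noteq> [] \<Longrightarrow> hd q = last q \<Longrightarrow> q = [hd q]"
  by (cases q) (auto split: if_splits)

lemma gpath_single: "x \<in> V \<Longrightarrow> gpath V E [x]"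
  by (auto simp: gpath_walk)

section \<open>Uniqueness of paths in trees\<close>

lemma no_two_paths:
  assumes nc: "\<nexists>c. gcycle V E c"
    and p: "gpath V E p" and q: "gpath V E q" and h: "hd p = hd q" and l: "last p = last q"
  shows "p = q"
  using p q h l
proof (induction p arbitrary: q)
  case Nil then show ?case by (simp add: gpath_def)
next
  case (Cons x p')
  have dq: "distinct q" "q \<noteq> []" using Cons.prems by (auto simp: gpath_def)
  obtain q' where qq: "q = x # q'" using Cons.prems(3) dq(2) by (cases q) auto
  show ?case
  proof (cases "p' = []")
    case True
    then have "hd q = last q" using Cons.prems by simp
    then have "q = [hd q]" using distinct_hd_last dq by blast
    then show ?thesis using True qq by auto
  next
    case pne: False
    have q'ne: "q' \<noteq> []"
    proof
      assume "q' = []"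
      then have "last p' = x" using Cons.prems qq pne by simp
      then show False using pne Cons.prems(1) by (auto simp: gpath_def)
    qed
    have gp': "gpath V E p'" using Cons.prems(1) pne gpath_suffix[of V E "[x]" p'] by simp
    have gq': "gpath V E q'" using Cons.prems(2) q'ne gpath_suffix[of V E "[x]" q'] qq by simp
    have ll: "last p' = last q'" using Cons.prems qq pne q'ne by simp
    show ?thesis
    proof (cases "hd p' = hd q'")
      case True
      then show ?thesis using Cons.IH[OF gp' gq' True ll] qq by simp
    next
      case hne: False
      have "\<exists>z\<in>set p'. z \<in> set q'" using ll pne q'ne by (metis last_in_set)
      then obtain P1 z P2 where ps: "p' = P1 @ z # P2" and zq: "z \<in> set q'" and P1: "\<forall>y\<in>set P1. y \<notin> set q'"
        using split_list_first_prop[of p' "\<lambda>z. z \<in> set q'"] by blast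
      obtain Q1 Q2 where qs: "q' = Q1 @ z # Q2" using zq split_list by metis
      define c where "c = x # P1 @ z # rev Q1"
      have dp: "distinct (x # p')" "set (x#p') \<subseteq> V" "walk E (x # p')" using Cons.prems(1) by (auto simp: gpath_walk)
      have dq2: "distinct (x # q')" "set (x#q') \<subseteq> V" "walk E (x # q')" using Cons.prems(2) qq by (auto simp: gpath_walk)
      have "distinct c" using dp(1) dq2(1) P1 unfolding c_def ps qs by auto
      moreover have "set c \<subseteq> V" using dp(2) dq2(2) unfolding c_def ps qs by auto
      moreover have "walk E c"
      proof -
        have w1: "walk E (x # P1 @ [z])" using dp(3) unfolding ps
          by (metis append.assoc append_Cons append_Nil walk_append)
        have w2: "walk E (Q1 @ [z])" using dq2(3) unfolding qs
          by (metis append.assoc append_Cons append_Nil walk_append walk_Cons)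
        then have w3: "walk E (z # rev Q1)" using walk_rev[of E "Q1 @ [z]"] by simp
        have "c = (x # P1 @ [z]) @ rev Q1" unfolding c_def by simp
        moreover have "rev Q1 \<noteq> [] \<longrightarrow> {z, hd (rev Q1)} \<in> E" using w3 by (simp add: walk_Cons)
        moreover have "hd (P1 @ [z]) = hd (P1 @ z # rev Q1)" by (cases P1) auto
        ultimately show ?thesis using w1 w3 by (simp add: walk_append walk_Cons)
      qed
      moreover have "length c \<ge> 3"
      proof -
        have "P1 \<noteq> [] \<or> Q1 \<noteq> []" using hne ps qs by auto
        then have "length P1 + length Q1 \<ge> 1" by (cases P1; cases Q1) auto
        then show ?thesis unfolding c_def by simp
      qed
      moreover have "{last c, hd c} \<in> E"
      proof -
        have e1: "{x, hd q'} \<in> E" using dq2(3) q'ne by (simp add: walk_Cons)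
        show ?thesis
        proof (cases "Q1 = []")
          case True
          then have "last c = hd q'" unfolding c_def qs by simp
          then show ?thesis using e1 by (simp add: c_def insert_commute)
        next
          case False
          then have "last c = hd q'" unfolding c_def qs by (simp add: last_rev)
          then show ?thesis using e1 by (simp add: c_def insert_commute)
        qed
      qed
      ultimately have "gcycle V E c" unfolding gcycle_def by (auto simp: gpath_walk c_def)
      then show ?thesis using nc by blast
    qed
  qed
qed



definition rootpath :: "'a set \<Rightarrow> 'a set set \<Rightarrow> 'a \<Rightarrow> 'a \<Rightarrow> 'a list" where
  "rootpath V E r y = (THE p. gpath V E p \<and> hd p = r \<and> last p = y)"

definition depth :: "'a set \<Rightarrow> 'a set set \<Rightarrow> 'a \<Rightarrow> 'a \<Rightarrow> nat" where
  "depth V E r y = length (rootpath V E r y)"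

lemma tree_unique: "is_tree V E \<Longrightarrow> gpath V E p \<Longrightarrow> gpath V E q \<Longrightarrow> hd p = hd q \<Longrightarrow> last p = last q \<Longrightarrow> p = q"
  using no_two_paths unfolding is_tree_def by blast

lemma rootpath:
  assumes T: "is_tree V E" "r \<in> V" "y \<in> V"
  shows "gpath V E (rootpath V E r y) \<and> hd (rootpath V E r y) = r \<and> last (rootpath V E r y) = y"
proof -
  obtain p where p: "gpath V E p" "hd p = r" "last p = y" using T unfolding is_tree_def by blast
  show ?thesis unfolding rootpath_def
  proof (rule theI[of _ p])
    show "gpath V E p \<and> hd p = r \<and> last p = y" using p by blast
    fix q assume "gpath V E q \<and> hd q = r \<and> last q = y"
    then show "q = p" using tree_unique[OF T(1), of q p] p by presburger
  qed
qed

lemma gpath_last: "gpath V E p \<Longrightarrow> last p \<in> V"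
  unfolding gpath_def by (auto intro: last_in_set)

lemma rootpath_eq: assumes "is_tree V E" "r \<in> V" "gpath V E p" "hd p = r" shows "rootpath V E r (last p) = p"
proof -
  have "last p \<in> V" using assms(3) by (rule gpath_last)
  note R = rootpath[OF assms(1,2) this]
  show ?thesis using tree_unique[OF assms(1), of "rootpath V E r (last p)" p] R assms(3,4) by presburger
qed

lemma tree_le_rp: assumes T: "is_tree V E" "r \<in> V" shows "tree_le V E r x y \<longleftrightarrow> y \<in> V \<and> x \<in> set (rootpath V E r y)"
proof
  assume "tree_le V E r x y"
  then obtain p where p: "gpath V E p" "hd p = r" "last p = y" "x \<in> set p" unfolding tree_le_def by blast
  then show "y \<in> V \<and> x \<in> set (rootpath V E r y)" using rootpath_eq[OF T p(1,2)] gpath_last[OF p(1)] by simp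
next
  assume "y \<in> V \<and> x \<in> set (rootpath V E r y)"
  then show "tree_le V E r x y" unfolding tree_le_def using rootpath[OF T] by blast
qed

lemma tree_le_V: "tree_le V E r x y \<Longrightarrow> x \<in> V \<and> y \<in> V"
  unfolding tree_le_def gpath_def by (auto intro: last_in_set)

lemma tree_le_refl: "is_tree V E \<Longrightarrow> r \<in> V \<Longrightarrow> x \<in> V \<Longrightarrow> tree_le V E r x x"
proof -
  assume T: "is_tree V E" "r \<in> V" "x \<in> V"
  have "last (rootpath V E r x) \<in> set (rootpath V E r x)" using rootpath[OF T] unfolding gpath_def by (meson last_in_set)
  then show ?thesis using rootpath[OF T] unfolding tree_le_def by auto
qed

lemma rp_prefix:
  assumes T: "is_tree V E" "r \<in> V" "y \<in> V" and s: "rootpath V E r y = A @ x # B"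
  shows "rootpath V E r x = A @ [x]"
proof -
  have g: "gpath V E (A @ x # B)" "hd (A @ x # B) = r" using rootpath[OF T] s by auto
  have "gpath V E (A @ [x])" using gpath_prefix[of V E "A @ [x]" B] g by simp
  moreover have "hd (A @ [x]) = r" using g by (cases A) auto
  ultimately have "rootpath V E r (last (A @ [x])) = A @ [x]" by (rule rootpath_eq[OF T(1,2)])
  then show ?thesis by simp
qed

lemma tree_le_trans:
  assumes T: "is_tree V E" "r \<in> V" and a: "tree_le V E r x y" "tree_le V E r y z"
  shows "tree_le V E r x z"
proof -
  have yz: "y \<in> V" "z \<in> V" using tree_le_V[OF a(1)] tree_le_V[OF a(2)] by auto
  have "y \<in> set (rootpath V E r z)" using a(2) tree_le_rp[OF T, of y z] by simp
  then obtain A B where s: "rootpath V E r z = A @ y # B" using split_list by fast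
  have "rootpath V E r y = A @ [y]" using rp_prefix[OF T yz(2) s] .
  then have "x \<in> set (A @ [y])" using a(1) tree_le_rp[OF T, of x y] by simp
  then have "x \<in> set (rootpath V E r z)" using s by auto
  then show ?thesis using tree_le_rp[OF T, of x z] yz by simp
qed

lemma tree_le_depth:
  assumes T: "is_tree V E" "r \<in> V" and a: "tree_le V E r x y"
  shows "depth V E r x \<le> depth V E r y" "depth V E r x = depth V E r y \<Longrightarrow> x = y"
proof -
  have yv: "y \<in> V" using tree_le_V[OF a] by auto
  have "x \<in> set (rootpath V E r y)" using a tree_le_rp[OF T, of x y] by simp
  then obtain A B where s: "rootpath V E r y = A @ x # B" using split_list by fast
  have px: "rootpath V E r x = A @ [x]" using rp_prefix[OF T yv s] .
  show "depth V E r x \<le> depth V E r y" unfolding depth_def s px by simp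
  assume "depth V E r x = depth V E r y"
  then have "B = []" unfolding depth_def s px by simp
  then show "x = y" using rootpath[OF T yv] s by simp
qed

lemma tree_le_antisym:
  assumes T: "is_tree V E" "r \<in> V" and a: "tree_le V E r x y" "tree_le V E r y x"
  shows "x = y"
  using tree_le_depth[OF T a(1)] tree_le_depth[OF T a(2)] by simp

lemma tree_le_finite:
  assumes T: "is_tree V E" "r \<in> V"
  shows "finite {x. tree_le V E r x y}"
proof -
  have "{x. tree_le V E r x y} \<subseteq> set (rootpath V E r y)" using tree_le_rp[OF T] by auto
  then show ?thesis by (rule finite_subset) simp
qed



lemma conn_F: "connectoid S F \<Longrightarrow> X \<in> F \<Longrightarrow> X \<in> conn_sets S F"
  unfolding connectoid_def conn_sets_def by blast

lemma conn_Un: assumes c: "connectoid S F" and A: "A \<in> conn_sets S F" and B: "B \<in> conn_sets S F"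
  and i: "A \<inter> B \<noteq> {}" shows "A \<union> B \<in> conn_sets S F"
proof -
  obtain c0 where c0: "c0 \<in> A" "c0 \<in> B" using i by blast
  have unall: "\<forall>X\<in>F. \<forall>Y\<in>F. X \<inter> Y \<noteq> {} \<longrightarrow> X \<union> Y \<in> F" using c unfolding connectoid_def by (elim conjE)
  have un: "X \<union> Y \<in> F" if "X \<in> F" "Y \<in> F" "X \<inter> Y \<noteq> {}" for X Y
    using unall that by blast
  have AB: "A \<subseteq> S" "B \<subseteq> S" using A B unfolding conn_sets_def by auto
  have pA: "\<forall>x\<in>A. \<forall>y\<in>A. \<exists>X\<in>F. X \<subseteq> A \<and> x \<in> X \<and> y \<in> X" using A unfolding conn_sets_def by simp
  have pB: "\<forall>x\<in>B. \<forall>y\<in>B. \<exists>X\<in>F. X \<subseteq> B \<and> x \<in> X \<and> y \<in> X" using B unfolding conn_sets_def by simp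
  have cross: "\<exists>X\<in>F. X \<subseteq> A \<union> B \<and> x \<in> X \<and> y \<in> X" if xy: "x \<in> A" "y \<in> B" for x y
  proof -
    from pA xy(1) c0(1) obtain X where X: "X \<in> F" "X \<subseteq> A" "x \<in> X" "c0 \<in> X" by blast
    from pB xy(2) c0(2) obtain Y where Y: "Y \<in> F" "Y \<subseteq> B" "c0 \<in> Y" "y \<in> Y" by blast
    have "X \<inter> Y \<noteq> {}" using X(4) Y(3) by blast
    then have "X \<union> Y \<in> F" using un X(1) Y(1) by simp
    moreover have "X \<union> Y \<subseteq> A \<union> B" using X(2) Y(2) by blast
    ultimately show ?thesis using X(3) Y(4) by blast
  qed
  have "\<forall>x\<in>A \<union> B. \<forall>y\<in>A \<union> B. \<exists>X\<in>F. X \<subseteq> A \<union> B \<and> x \<in> X \<and> y \<in> X"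
  proof (intro ballI)
    fix x y assume xy: "x \<in> A \<union> B" "y \<in> A \<union> B"
    show "\<exists>X\<in>F. X \<subseteq> A \<union> B \<and> x \<in> X \<and> y \<in> X"
    proof (cases "x \<in> A")
      case xA: True
      show ?thesis
      proof (cases "y \<in> A")
        case True
        from pA xA True obtain X where "X \<in> F" "X \<subseteq> A" "x \<in> X" "y \<in> X" by blast
        then show ?thesis by blast
      next
        case False then have "y \<in> B" using xy by blast
        then show ?thesis using cross xA by blast
      qed
    next
      case xB: False
      then have xB: "x \<in> B" using xy by blast
      show ?thesis
      proof (cases "y \<in> B")
        case True
        from pB xB True obtain X where "X \<in> F" "X \<subseteq> B" "x \<in> X" "y \<in> X" by blast
        then show ?thesis by blast
      next
        case False then have "y \<in> A" using xy by blast
        from cross[OF this xB] show ?thesis by blast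
      qed
    qed
  qed
  then show ?thesis using AB unfolding conn_sets_def by blast
qed

lemma comp_props: "K \<in> components CC A \<Longrightarrow> K \<noteq> {} \<and> K \<subseteq> A \<and> K \<in> CC"
  unfolding components_def by blast

lemma comp_max: "K \<in> components CC A \<Longrightarrow> K \<subseteq> K' \<Longrightarrow> K' \<subseteq> A \<Longrightarrow> K' \<in> CC \<Longrightarrow> K' = K"
  unfolding components_def by blast

lemma comp_disj: assumes c: "connectoid S F" and K: "K \<in> components (conn_sets S F) A"
  and K': "K' \<in> components (conn_sets S F) A" and i: "K \<inter> K' \<noteq> {}" shows "K = K'"
proof -
  have u: "K \<union> K' \<in> conn_sets S F" using conn_Un[OF c _ _ i] comp_props[OF K] comp_props[OF K'] by blast
  have "K \<union> K' = K" using comp_max[OF K _ _ u] comp_props[OF K] comp_props[OF K'] by blast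
  moreover have "K \<union> K' = K'" using comp_max[OF K' _ _ u] comp_props[OF K] comp_props[OF K'] by blast
  ultimately show ?thesis by simp
qed

lemma comp_absorb: assumes c: "connectoid S F" and K: "K \<in> components (conn_sets S F) (S - Y)"
  and X: "X \<in> F" and i: "X \<inter> K \<noteq> {}" and d: "X \<inter> Y = {}" shows "X \<subseteq> K"
proof -
  have XS: "X \<subseteq> S" using c X unfolding connectoid_def by blast
  have u: "K \<union> X \<in> conn_sets S F" using conn_Un[OF c _ conn_F[OF c X]] comp_props[OF K] i by blast
  have "K \<union> X = K" using comp_max[OF K _ _ u] comp_props[OF K] XS d by blast
  then show ?thesis by blast
qed



lemma gate_aux:
  assumes g: "\<And>x y. {x,y} \<in> E \<Longrightarrow> x \<in> W \<Longrightarrow> y \<notin> W \<Longrightarrow> x = g \<and> y = h"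
  shows "distinct p \<Longrightarrow> p \<noteq> [] \<Longrightarrow> walk E p \<Longrightarrow>
   (hd p \<in> W \<longrightarrow> last p \<in> W \<longrightarrow> set p \<subseteq> W) \<and> (hd p \<notin> W \<longrightarrow> last p \<notin> W \<longrightarrow> set p \<inter> W = {}) \<and>
   (hd p \<notin> W \<longrightarrow> last p \<in> W \<longrightarrow> g \<in> set p \<and> h \<in> set p) \<and>
   (hd p \<in> W \<longrightarrow> last p \<notin> W \<longrightarrow> g \<in> set p \<and> h \<in> set p)"
proof (induction p)
  case Nil then show ?case by simp
next
  case (Cons x q)
  show ?case
  proof (cases "q = []")
    case True then show ?thesis by simp
  next
    case qne: False
    have d: "distinct q" "x \<notin> set q" using Cons.prems by auto
    have w: "walk E q" "{x, hd q} \<in> E" using Cons.prems qne by (auto simp: walk_Cons)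
    note IH = Cons.IH[OF d(1) qne w(1)]
    have hq: "hd q \<in> set q" using qne by simp
    have e1: "x \<in> W \<Longrightarrow> hd q \<notin> W \<Longrightarrow> x = g \<and> hd q = h" using g[OF w(2)] by blast
    have e2: "hd q \<in> W \<Longrightarrow> x \<notin> W \<Longrightarrow> hd q = g \<and> x = h" using g[of "hd q" x] w(2) by (simp add: insert_commute)
    have hl: "hd (x # q) = x" "last (x # q) = last q" "set (x # q) = insert x (set q)" using qne by auto
    have C1: "insert x (set q) \<subseteq> W" if "x \<in> W" "last q \<in> W"
    proof (cases "hd q \<in> W")
      case True then show ?thesis using IH that by simp
    next
      case False
      then have "x = g" using e1 that by simp
      moreover have "g \<in> set q" using IH False that by simp
      ultimately show ?thesis using d(2) by simp
    qed
    have C2: "insert x (set q) \<inter> W = {}" if "x \<notin> W" "last q \<notin> W"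
    proof (cases "hd q \<in> W")
      case True
      then have "x = h" using e2 that by simp
      moreover have "h \<in> set q" using IH True that by simp
      ultimately show ?thesis using d(2) by simp
    next
      case False then show ?thesis using IH that by simp
    qed
    have C3: "g \<in> insert x (set q) \<and> h \<in> insert x (set q)" if "x \<notin> W" "last q \<in> W"
    proof (cases "hd q \<in> W")
      case True then show ?thesis using e2 that hq by simp
    next
      case False then show ?thesis using IH that by simp
    qed
    have C4: "g \<in> insert x (set q) \<and> h \<in> insert x (set q)" if "x \<in> W" "last q \<notin> W"
    proof (cases "hd q \<in> W")
      case True then show ?thesis using IH that by simp
    next
      case False then show ?thesis using e1 that hq by simp
    qed
    show ?thesis unfolding hl using C1 C2 C3 C4 by blast
  qed
qed

lemma gate_gpath:
  assumes g: "\<And>x y. {x,y} \<in> E \<Longrightarrow> x \<in> W \<Longrightarrow> y \<notin> W \<Longrightarrow> x = g \<and> y = h"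
    and p: "gpath V E p"
  shows "hd p \<in> W \<Longrightarrow> last p \<in> W \<Longrightarrow> set p \<subseteq> W"
    and "hd p \<notin> W \<Longrightarrow> last p \<notin> W \<Longrightarrow> set p \<inter> W = {}"
    and "hd p \<notin> W \<Longrightarrow> last p \<in> W \<Longrightarrow> g \<in> set p \<and> h \<in> set p"
    and "hd p \<in> W \<Longrightarrow> last p \<notin> W \<Longrightarrow> g \<in> set p \<and> h \<in> set p"
  using gate_aux[of E W g h p, OF g] p unfolding gpath_walk by blast+

lemma gate_split:
  assumes g: "\<And>x y. {x,y} \<in> E \<Longrightarrow> x \<in> W \<Longrightarrow> y \<notin> W \<Longrightarrow> x = g \<and> y = h"
    and gW: "g \<in> W"
    and p: "gpath V E p" and hp: "hd p \<notin> W" and lp: "last p \<in> W"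
  shows "\<exists>A B. p = A @ B \<and> A \<noteq> [] \<and> B \<noteq> [] \<and> set A \<inter> W = {} \<and> set B \<subseteq> W \<and> last A = h \<and> hd B = g"
proof -
  have "g \<in> set p" using gate_gpath(3)[OF g p hp lp] by blast
  then obtain A B' where s: "p = A @ g # B'" using split_list by fast
  have Ane: "A \<noteq> []" using hp gW s by auto
  have gA: "gpath V E A" using gpath_prefix[of V E A "g # B'"] p s Ane by simp
  have gB: "gpath V E (g # B')" using gpath_suffix[of V E A "g # B'"] p s by simp
  have dis: "g \<notin> set A" using p s unfolding gpath_def by auto
  have e: "{last A, g} \<in> E" using p s Ane unfolding gpath_walk by (simp add: walk_append)
  have hA: "hd A \<notin> W" using hp s Ane by simp
  have lA: "last A \<notin> W"
  proof
    assume "last A \<in> W"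
    then have "g \<in> set A" using gate_gpath(3)[OF g gA hA] by blast
    then show False using dis by simp
  qed
  have A1: "set A \<inter> W = {}" using gate_gpath(2)[OF g gA hA lA] .
  have A2: "last A = h" using g[of g "last A"] e gW lA by (simp add: insert_commute)
  have B1: "set (g # B') \<subseteq> W" using gate_gpath(1)[OF g gB] gW lp s by simp
  show ?thesis using s Ane A1 A2 B1 by (intro exI[of _ A] exI[of _ "g # B'"]) simp
qed



locale P63 =
  fixes S :: "'a set" and F :: "'a set set"
    and V :: "'a set" and E :: "'a set set" and r :: 'a
    and VK :: "'a set \<Rightarrow> 'a set" and EK :: "'a set \<Rightarrow> 'a set set" and rK :: "'a set \<Rightarrow> 'a"
  assumes conn: "connectoid S F"
    and S_conn: "S \<in> conn_sets S F"
    and T_normal: "normal_tree S (conn_sets S F) V E r"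
    and adhesion: "\<forall>K\<in>components (conn_sets S F) (S - V).
                     finite_adhesion (conn_sets S F) S V K"
    and TK_normal: "\<forall>K\<in>components (conn_sets S F) (S - V).
                     (VK K = {} \<and> EK K = {}) \<or>
                     normal_tree K (conn_sets S F \<inter> Pow K) (VK K) (EK K) (rK K)"
begin

abbreviation "CC \<equiv> conn_sets S F"
abbreviation "comps \<equiv> components CC (S - V)"
abbreviation "tle \<equiv> tree_le V E r"
abbreviation "tleK K \<equiv> tree_le (VK K) (EK K) (rK K)"

definition act :: "'a set \<Rightarrow> bool" where "act K \<longleftrightarrow> K \<in> comps \<and> VK K \<noteq> {}"

lemma T_tree: "is_tree V E" "r \<in> V" "V \<subseteq> S"
  using T_normal unfolding normal_tree_def weak_normal_tree_def rooted_tree_def by auto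

lemma T_cond1: "C \<in> CC \<Longrightarrow> u \<in> C \<Longrightarrow> v \<in> C \<Longrightarrow> u \<in> V \<Longrightarrow> v \<in> V \<Longrightarrow> \<not> tle u v \<Longrightarrow> \<not> tle v u
   \<Longrightarrow> \<exists>w\<in>C. tle w u \<and> tle w v"
  using T_normal unfolding normal_tree_def weak_normal_tree_def by blast

lemma T_cond2: "tle u v \<Longrightarrow> \<exists>C\<in>CC. u \<in> C \<and> v \<in> C \<and> C \<inter> down_open V E r u = {}"
proof -
  assume a: "tle u v"
  have "u \<in> V" "v \<in> V" using tree_le_V[OF a] by auto
  then show ?thesis using a T_normal unfolding normal_tree_def weak_normal_tree_def by blast
qed

lemma T_rays: "rooted_ray V E r R \<Longrightarrow> \<exists>N. necklace CC N \<and> finite {n. R n \<notin> N}"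
  using T_normal unfolding normal_tree_def by blast

lemma E_sub: "e \<in> E \<Longrightarrow> \<exists>x y. x \<noteq> y \<and> x \<in> V \<and> y \<in> V \<and> e = {x, y}"
  using T_tree(1) unfolding is_tree_def ugraph_def by blast

lemma E_subV: "e \<in> E \<Longrightarrow> e \<subseteq> V"
  using E_sub by blast

lemma K_props: "K \<in> comps \<Longrightarrow> K \<noteq> {} \<and> K \<subseteq> S - V \<and> K \<in> CC"
  by (rule comp_props)

lemma act_normal: "act K \<Longrightarrow> normal_tree K (CC \<inter> Pow K) (VK K) (EK K) (rK K)"
  using TK_normal unfolding act_def by blast

lemma notact: "K \<in> comps \<Longrightarrow> \<not> act K \<Longrightarrow> VK K = {} \<and> EK K = {}"
  using TK_normal unfolding act_def normal_tree_def weak_normal_tree_def rooted_tree_def is_tree_def by blast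

lemma TK_tree: "act K \<Longrightarrow> is_tree (VK K) (EK K) \<and> rK K \<in> VK K \<and> VK K \<subseteq> K"
  using act_normal unfolding normal_tree_def weak_normal_tree_def rooted_tree_def by blast

lemma TK_cond1: "act K \<Longrightarrow> C \<in> CC \<inter> Pow K \<Longrightarrow> u \<in> C \<Longrightarrow> v \<in> C \<Longrightarrow> u \<in> VK K \<Longrightarrow> v \<in> VK K
   \<Longrightarrow> \<not> tleK K u v \<Longrightarrow> \<not> tleK K v u \<Longrightarrow> \<exists>w\<in>C. tleK K w u \<and> tleK K w v"
proof -
  assume a: "act K" "C \<in> CC \<inter> Pow K" "u \<in> C" "v \<in> C" "u \<in> VK K" "v \<in> VK K" "\<not> tleK K u v" "\<not> tleK K v u"
  from act_normal[OF a(1)] have "weak_normal_tree K (CC \<inter> Pow K) (VK K) (EK K) (rK K)" unfolding normal_tree_def by blast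
  then have "\<forall>C\<in>CC \<inter> Pow K. \<forall>u\<in>C \<inter> VK K. \<forall>v\<in>C \<inter> VK K.
         \<not> tleK K u v \<and> \<not> tleK K v u \<longrightarrow> (\<exists>w\<in>C. tleK K w u \<and> tleK K w v)" unfolding weak_normal_tree_def by blast
  then show ?thesis using a(2-8) by blast
qed

lemma TK_cond2: "act K \<Longrightarrow> tleK K u v \<Longrightarrow> \<exists>C\<in>CC \<inter> Pow K. u \<in> C \<and> v \<in> C \<and> C \<inter> down_open (VK K) (EK K) (rK K) u = {}"
proof -
  assume a: "act K" "tleK K u v"
  have uv: "u \<in> VK K" "v \<in> VK K" using tree_le_V[OF a(2)] by auto
  from act_normal[OF a(1)] have "weak_normal_tree K (CC \<inter> Pow K) (VK K) (EK K) (rK K)" unfolding normal_tree_def by blast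
  then have "\<forall>u\<in>VK K. \<forall>v\<in>VK K. tleK K u v \<longrightarrow>
         (\<exists>C\<in>CC \<inter> Pow K. u \<in> C \<and> v \<in> C \<and> C \<inter> down_open (VK K) (EK K) (rK K) u = {})" unfolding weak_normal_tree_def by blast
  then show ?thesis using uv a(2) by blast
qed

lemma TK_rays: "act K \<Longrightarrow> rooted_ray (VK K) (EK K) (rK K) R \<Longrightarrow> \<exists>N. necklace (CC \<inter> Pow K) N \<and> finite {n. R n \<notin> N}"
  using act_normal unfolding normal_tree_def by blast

lemma VK_sub: "K \<in> comps \<Longrightarrow> VK K \<subseteq> K"
  using TK_tree[of K] notact[of K] by blast

lemma VK_V: "K \<in> comps \<Longrightarrow> VK K \<inter> V = {}"
proof -
  assume K: "K \<in> comps"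
  have "VK K \<subseteq> K" "K \<subseteq> S - V" using VK_sub[OF K] K_props[OF K] by auto
  then show ?thesis by blast
qed

lemma EK_sub: "K \<in> comps \<Longrightarrow> e \<in> EK K \<Longrightarrow> e \<subseteq> VK K"
proof -
  assume a: "K \<in> comps" "e \<in> EK K"
  have "act K"
  proof (rule ccontr)
    assume "\<not> act K" then have "EK K = {}" using notact[OF a(1)] by simp
    then show False using a(2) by simp
  qed
  then have "ugraph (VK K) (EK K)" using TK_tree[of K] unfolding is_tree_def by simp
  then have "\<exists>x y. x \<noteq> y \<and> x \<in> VK K \<and> y \<in> VK K \<and> e = {x, y}" using a(2) unfolding ugraph_def by simp
  then show ?thesis by auto
qed

lemma comp_disj': assumes "K \<in> comps" "K' \<in> comps" "x \<in> K" "x \<in> K'" shows "K = K'"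
proof -
  have "K \<inter> K' \<noteq> {}" using assms(3,4) by blast
  then show ?thesis by (rule comp_disj[OF conn assms(1,2)])
qed

lemma VK_disj: "K \<in> comps \<Longrightarrow> K' \<in> comps \<Longrightarrow> x \<in> VK K \<Longrightarrow> x \<in> VK K' \<Longrightarrow> K = K'"
  using comp_disj'[of K K' x] VK_sub[of K] VK_sub[of K'] by blast

section \<open>Crossing sets and the attachment vertex\<close>

definition cross :: "'a set \<Rightarrow> 'a set set" where
  "cross K = {X \<in> F. X \<inter> K \<noteq> {} \<and> \<not> X \<subseteq> K}"

definition ismin :: "'a set \<Rightarrow> 'a \<Rightarrow> bool" where
  "ismin X m \<longleftrightarrow> m \<in> X \<inter> V \<and> (\<forall>y\<in>X \<inter> V. tle m y)"

lemma F_props: "X \<in> F \<Longrightarrow> X \<subseteq> S \<and> finite X"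
  using conn unfolding connectoid_def by blast

lemma cross_V: "K \<in> comps \<Longrightarrow> X \<in> cross K \<Longrightarrow> X \<inter> V \<noteq> {}"
  using comp_absorb[OF conn, of K V X] unfolding cross_def by blast

lemma min_ex: assumes X: "X \<in> F" and ne: "X \<inter> V \<noteq> {}" shows "\<exists>m. ismin X m"
proof -
  obtain v where v: "v \<in> X \<inter> V" using ne by blast
  obtain m where m: "m \<in> X \<inter> V" and mm: "\<forall>y. y \<in> X \<inter> V \<longrightarrow> depth V E r m \<le> depth V E r y"
    using ex_has_least_nat[of "\<lambda>y. y \<in> X \<inter> V" v "depth V E r"] v by blast
  have XC: "X \<in> CC" using conn_F[OF conn X] .
  have "tle m y" if y: "y \<in> X \<inter> V" for y
  proof (rule ccontr)
    assume n1: "\<not> tle m y"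
    have n2: "\<not> tle y m"
    proof
      assume a: "tle y m"
      have "depth V E r y = depth V E r m" using tree_le_depth(1)[OF T_tree(1,2) a] mm y by fastforce
      then have "y = m" using tree_le_depth(2)[OF T_tree(1,2) a] by simp
      then show False using n1 tree_le_refl[OF T_tree(1,2)] y by blast
    qed
    obtain w where w: "w \<in> X" "tle w m" "tle w y" using T_cond1[OF XC _ _ _ _ n1 n2] m y by blast
    have wV: "w \<in> V" using tree_le_V[OF w(2)] by simp
    have "depth V E r w = depth V E r m" using tree_le_depth(1)[OF T_tree(1,2) w(2)] mm w(1) wV by fastforce
    then have "w = m" using tree_le_depth(2)[OF T_tree(1,2) w(2)] by simp
    then show False using n1 w(3) by simp
  qed
  then show ?thesis unfolding ismin_def using m by blast
qed

lemma min_unique: "ismin X m \<Longrightarrow> ismin X m' \<Longrightarrow> m = m'"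
  unfolding ismin_def using tree_le_antisym[OF T_tree(1,2)] by blast

lemma min_chain: assumes K: "K \<in> comps" and X0: "X0 \<in> cross K" and X1: "X1 \<in> cross K"
  and m0: "ismin X0 m0" and m1: "ismin X1 m1" shows "tle m0 m1 \<or> tle m1 m0"
proof (rule ccontr)
  assume n: "\<not> (tle m0 m1 \<or> tle m1 m0)"
  have X0F: "X0 \<in> F" "X0 \<inter> K \<noteq> {}" and X1F: "X1 \<in> F" "X1 \<inter> K \<noteq> {}" using X0 X1 unfolding cross_def by auto
  have KC: "K \<in> CC" using K_props[OF K] by blast
  have C0: "K \<union> X0 \<in> CC" using conn_Un[OF conn KC conn_F[OF conn X0F(1)]] X0F(2) by blast
  have C: "(K \<union> X0) \<union> X1 \<in> CC" using conn_Un[OF conn C0 conn_F[OF conn X1F(1)]] X1F(2) by blast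
  have mm: "m0 \<in> X0" "m0 \<in> V" "m1 \<in> X1" "m1 \<in> V" using m0 m1 unfolding ismin_def by auto
  obtain w where w: "w \<in> (K \<union> X0) \<union> X1" "tle w m0" "tle w m1"
    using T_cond1[OF C, of m0 m1] mm n by blast
  have wV: "w \<in> V" using tree_le_V[OF w(2)] by simp
  then have "w \<notin> K" using K_props[OF K] by blast
  then have "w \<in> X0 \<or> w \<in> X1" using w(1) by blast
  then show False
  proof
    assume "w \<in> X0"
    then have "tle m0 w" using m0 wV unfolding ismin_def by blast
    then have "w = m0" using tree_le_antisym[OF T_tree(1,2)] w(2) by blast
    then show False using n w(3) by simp
  next
    assume "w \<in> X1"
    then have "tle m1 w" using m1 wV unfolding ismin_def by blast
    then have "w = m1" using tree_le_antisym[OF T_tree(1,2)] w(3) by blast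
    then show False using n w(2) by simp
  qed
qed

definition Ms :: "'a set \<Rightarrow> 'a set" where "Ms K = {m. \<exists>X\<in>cross K. ismin X m}"

lemma Ms_fin: assumes K: "K \<in> comps" shows "finite (Ms K)"
proof -
  obtain Y where Y: "Y \<subseteq> V" "finite Y" "K \<in> components CC (S - Y)"
    using adhesion K unfolding finite_adhesion_def by blast
  have "Ms K \<subseteq> (\<Union>y\<in>Y. {m. tle m y})"
  proof
    fix m assume "m \<in> Ms K"
    then obtain X where X: "X \<in> cross K" "ismin X m" unfolding Ms_def by blast
    have "X \<inter> Y \<noteq> {}"
    proof
      assume "X \<inter> Y = {}"
      then have "X \<subseteq> K" using comp_absorb[OF conn Y(3), of X] X(1) unfolding cross_def by blast
      then show False using X(1) unfolding cross_def by blast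
    qed
    then obtain y where y: "y \<in> X" "y \<in> Y" by blast
    then have "tle m y" using X(2) Y(1) unfolding ismin_def by blast
    then show "m \<in> (\<Union>y\<in>Y. {m. tle m y})" using y(2) by blast
  qed
  moreover have "finite (\<Union>y\<in>Y. {m. tle m y})" using Y(2) tree_le_finite[OF T_tree(1,2)] by blast
  ultimately show ?thesis by (rule finite_subset)
qed

lemma Ms_ne: assumes K: "K \<in> comps" shows "Ms K \<noteq> {}"
proof -
  obtain k where k: "k \<in> K" using K_props[OF K] by blast
  have kS: "k \<in> S" using k K_props[OF K] by blast
  have rS: "r \<in> S" using T_tree by blast
  obtain X where X: "X \<in> F" "X \<subseteq> S" "k \<in> X" "r \<in> X" using S_conn kS rS unfolding conn_sets_def by blast
  have rK: "r \<notin> K" using K_props[OF K] T_tree(2) by blast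
  have Xc: "X \<in> cross K" unfolding cross_def using X k rK by blast
  have "X \<inter> V \<noteq> {}" using X(4) T_tree(2) by blast
  then obtain m where "ismin X m" using min_ex X(1) by blast
  then show ?thesis unfolding Ms_def using Xc by blast
qed

definition goodt :: "'a set \<Rightarrow> 'a \<Rightarrow> bool" where
  "goodt K t \<longleftrightarrow> t \<in> V \<and> (\<forall>X\<in>cross K. \<forall>m. ismin X m \<longrightarrow> tle m t) \<and> (\<exists>X\<in>cross K. ismin X t)"

lemma goodt_ex: assumes K: "K \<in> comps" shows "\<exists>t. goodt K t"
proof -
  let ?D = "depth V E r ` Ms K"
  have fin: "finite ?D" "?D \<noteq> {}" using Ms_fin[OF K] Ms_ne[OF K] by auto
  obtain t where t: "t \<in> Ms K" "depth V E r t = Max ?D" using Max_in[OF fin] by auto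
  obtain Xt where Xt: "Xt \<in> cross K" "ismin Xt t" using t(1) unfolding Ms_def by blast
  have tV: "t \<in> V" using Xt(2) unfolding ismin_def by blast
  have "tle m t" if X: "X \<in> cross K" and m: "ismin X m" for X m
  proof -
    have mM: "m \<in> Ms K" unfolding Ms_def using X m by blast
    have mV: "m \<in> V" using m unfolding ismin_def by blast
    from min_chain[OF K X Xt(1) m Xt(2)] show ?thesis
    proof
      assume "tle m t" then show ?thesis .
    next
      assume a: "tle t m"
      have "depth V E r m \<le> depth V E r t" using t(2) Max_ge[OF fin(1)] mM by simp
      then have "depth V E r t = depth V E r m" using tree_le_depth(1)[OF T_tree(1,2) a] by simp
      then have "t = m" using tree_le_depth(2)[OF T_tree(1,2) a] by simp
      then show ?thesis using tree_le_refl[OF T_tree(1,2) mV] by simp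
    qed
  qed
  then show ?thesis unfolding goodt_def using tV Xt by blast
qed

definition tt :: "'a set \<Rightarrow> 'a" where "tt K = (SOME t. goodt K t)"

lemma tt: "K \<in> comps \<Longrightarrow> goodt K (tt K)"
  unfolding tt_def using goodt_ex someI_ex by metis

lemma cross_min_below: assumes K: "K \<in> comps" and X: "X \<in> F" "X \<inter> K \<noteq> {}" "\<not> X \<subseteq> K"
  shows "\<exists>m. ismin X m \<and> tle m (tt K)"
proof -
  have Xc: "X \<in> cross K" unfolding cross_def using X by blast
  obtain m where m: "ismin X m" using min_ex[OF X(1) cross_V[OF K Xc]] by blast
  then show ?thesis using tt[OF K] Xc unfolding goodt_def by blast
qed

end



context P63 begin

definition V' :: "'a set" where "V' = V \<union> (\<Union>K\<in>comps. VK K)"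
definition E' :: "'a set set" where "E' = E \<union> (\<Union>K\<in>comps. EK K) \<union> {{tt K, rK K} | K. act K}"

abbreviation "tle' \<equiv> tree_le V' E' r"

lemma act_comp: "act K \<Longrightarrow> K \<in> comps"
  unfolding act_def by simp

lemma in_VK_act: "K \<in> comps \<Longrightarrow> x \<in> VK K \<Longrightarrow> act K"
  unfolding act_def by blast

lemma tt_V: "K \<in> comps \<Longrightarrow> tt K \<in> V"
  using tt[of K] unfolding goodt_def by simp

lemma rK_VK: "act K \<Longrightarrow> rK K \<in> VK K"
  using TK_tree[of K] by simp

lemma VK_notV: "K \<in> comps \<Longrightarrow> x \<in> VK K \<Longrightarrow> x \<notin> V"
  using VK_V[of K] by blast

lemma V'_cases: "x \<in> V' \<Longrightarrow> x \<in> V \<or> (\<exists>K. act K \<and> x \<in> VK K)"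
  unfolding V'_def act_def by blast

lemma V_sub: "V \<subseteq> V'" and VK_sub': "K \<in> comps \<Longrightarrow> VK K \<subseteq> V'"
  unfolding V'_def by auto

lemma E_sub': "E \<subseteq> E'" and EK_sub': "K \<in> comps \<Longrightarrow> EK K \<subseteq> E'"
  unfolding E'_def by auto

lemma conn_edge: "act K \<Longrightarrow> {tt K, rK K} \<in> E'"
  unfolding E'_def by blast

lemma E'_cases: "e \<in> E' \<Longrightarrow> e \<in> E \<or> (\<exists>K\<in>comps. e \<in> EK K) \<or> (\<exists>K. act K \<and> e = {tt K, rK K})"
  unfolding E'_def by blast

lemma doubleton_eq: "{x, y} = {a, b} \<Longrightarrow> a \<noteq> b \<Longrightarrow> (x = a \<and> y = b) \<or> (x = b \<and> y = a)"
  by (metis doubleton_eq_iff)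

lemma gateK: assumes K: "act K" and e: "{x, y} \<in> E'" and x: "x \<in> VK K" and y: "y \<notin> VK K"
  shows "x = rK K \<and> y = tt K"
proof -
  have Kc: "K \<in> comps" using act_comp[OF K] .
  have xV: "x \<notin> V" using VK_notV[OF Kc x] .
  from E'_cases[OF e] show ?thesis
  proof (elim disjE)
    assume "{x, y} \<in> E"
    then have "x \<in> V" using E_subV[of "{x,y}"] by simp
    then show ?thesis using xV by simp
  next
    assume "\<exists>K'\<in>comps. {x, y} \<in> EK K'"
    then obtain K' where K': "K' \<in> comps" "{x, y} \<in> EK K'" by blast
    have "x \<in> VK K'" "y \<in> VK K'" using EK_sub[OF K'] by auto
    then have "K' = K" using VK_disj[OF K'(1) Kc, of x] x by simp
    then show ?thesis using y \<open>y \<in> VK K'\<close> by simp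
  next
    assume "\<exists>K'. act K' \<and> {x, y} = {tt K', rK K'}"
    then obtain K' where K': "act K'" "{x, y} = {tt K', rK K'}" by blast
    have K'c: "K' \<in> comps" using act_comp[OF K'(1)] .
    have ne: "tt K' \<noteq> rK K'" using tt_V[OF K'c] VK_notV[OF K'c rK_VK[OF K'(1)]] by auto
    from doubleton_eq[OF K'(2) ne] show ?thesis
    proof
      assume "x = tt K' \<and> y = rK K'"
      then show ?thesis using xV tt_V[OF K'c] by simp
    next
      assume a: "x = rK K' \<and> y = tt K'"
      then have "x \<in> VK K'" using rK_VK[OF K'(1)] by simp
      then have "K' = K" using VK_disj[OF K'c Kc, of x] x by simp
      then show ?thesis using a by simp
    qed
  qed
qed

lemma edgeV: assumes e: "{x, y} \<in> E'" and x: "x \<in> V" and y: "y \<in> V" shows "{x, y} \<in> E"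
proof -
  from E'_cases[OF e] show ?thesis
  proof (elim disjE)
    assume "{x, y} \<in> E" then show ?thesis .
  next
    assume "\<exists>K'\<in>comps. {x, y} \<in> EK K'"
    then obtain K' where K': "K' \<in> comps" "{x, y} \<in> EK K'" by blast
    have "x \<in> VK K'" using EK_sub[OF K'] by auto
    then show ?thesis using VK_notV[OF K'(1)] x by blast
  next
    assume "\<exists>K'. act K' \<and> {x, y} = {tt K', rK K'}"
    then obtain K' where K': "act K'" "{x, y} = {tt K', rK K'}" by blast
    have K'c: "K' \<in> comps" using act_comp[OF K'(1)] .
    have "rK K' \<in> {x, y}" using K'(2) by simp
    then have "rK K' \<in> V" using x y by auto
    then show ?thesis using VK_notV[OF K'c rK_VK[OF K'(1)]] by simp
  qed
qed

lemma edgeK: assumes K: "act K" and e: "{x, y} \<in> E'" and x: "x \<in> VK K" and y: "y \<in> VK K" shows "{x, y} \<in> EK K"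
proof -
  have Kc: "K \<in> comps" using act_comp[OF K] .
  from E'_cases[OF e] show ?thesis
  proof (elim disjE)
    assume "{x, y} \<in> E"
    then have "x \<in> V" using E_subV[of "{x,y}"] by simp
    then show ?thesis using VK_notV[OF Kc x] by simp
  next
    assume "\<exists>K'\<in>comps. {x, y} \<in> EK K'"
    then obtain K' where K': "K' \<in> comps" "{x, y} \<in> EK K'" by blast
    have "x \<in> VK K'" using EK_sub[OF K'] by auto
    then have "K' = K" using VK_disj[OF K'(1) Kc, of x] x by simp
    then show ?thesis using K'(2) by simp
  next
    assume "\<exists>K'. act K' \<and> {x, y} = {tt K', rK K'}"
    then obtain K' where K': "act K'" "{x, y} = {tt K', rK K'}" by blast
    have K'c: "K' \<in> comps" using act_comp[OF K'(1)] .
    have "tt K' \<in> {x, y}" using K'(2) by simp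
    then have "tt K' \<in> VK K" using x y by auto
    then show ?thesis using VK_notV[OF Kc] tt_V[OF K'c] by blast
  qed
qed

lemma walk_V: "walk E' p \<Longrightarrow> set p \<subseteq> V \<Longrightarrow> walk E p"
  by (induction E' p rule: walk.induct) (auto intro: edgeV)

lemma walk_K: "act K \<Longrightarrow> walk E' p \<Longrightarrow> set p \<subseteq> VK K \<Longrightarrow> walk (EK K) p"
  by (induction E' p rule: walk.induct) (auto intro: edgeK)

lemma gp_V: "gpath V' E' p \<Longrightarrow> set p \<subseteq> V \<Longrightarrow> gpath V E p"
  unfolding gpath_walk using walk_V by blast

lemma gp_K: "act K \<Longrightarrow> gpath V' E' p \<Longrightarrow> set p \<subseteq> VK K \<Longrightarrow> gpath (VK K) (EK K) p"
  unfolding gpath_walk using walk_K by blast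

lemma gp_mono_V: "gpath V E p \<Longrightarrow> gpath V' E' p"
  using gpath_mono V_sub E_sub' by blast

lemma gp_mono_K: "K \<in> comps \<Longrightarrow> gpath (VK K) (EK K) p \<Longrightarrow> gpath V' E' p"
  using gpath_mono VK_sub' EK_sub' by blast

lemma gateK': "act K \<Longrightarrow> {x, y} \<in> E' \<Longrightarrow> x \<in> VK K \<Longrightarrow> y \<notin> VK K \<Longrightarrow> x = rK K \<and> y = tt K"
  by (rule gateK)

lemma stayV: assumes p: "gpath V' E' p" and h: "hd p \<in> V" and l: "last p \<in> V" shows "set p \<subseteq> V"
proof
  fix z assume z: "z \<in> set p"
  have "z \<in> V'" using p z unfolding gpath_def by blast
  then show "z \<in> V"
  proof (rule V'_cases[elim_format], elim disjE exE conjE)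
    fix K assume K: "act K" and zK: "z \<in> VK K"
    have Kc: "K \<in> comps" using act_comp[OF K] .
    have "set p \<inter> VK K = {}"
      using gate_gpath(2)[of E' "VK K" "rK K" "tt K", OF gateK'[OF K] p] VK_notV[OF Kc] h l by blast
    then show ?thesis using z zK by blast
  qed
qed

end



context P63 begin

lemma TL1': assumes a: "tle' x y" and y: "y \<in> V" shows "x \<in> V \<and> tle x y"
proof -
  obtain p where p: "gpath V' E' p" "hd p = r" "last p = y" "x \<in> set p" using a unfolding tree_le_def by blast
  have s: "set p \<subseteq> V" using stayV[OF p(1)] p(2,3) T_tree(2) y by simp
  have "gpath V E p" using gp_V[OF p(1) s] .
  then show ?thesis using p s unfolding tree_le_def by blast
qed

lemma TL1: "tle x y \<Longrightarrow> tle' x y"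
  unfolding tree_le_def using gp_mono_V by blast

lemma glue: assumes K: "act K" and a: "gpath V E a" "last a = tt K" and b: "gpath (VK K) (EK K) b" "hd b = rK K"
  shows "gpath V' E' (a @ b)"
proof (rule gpath_appendI)
  show "gpath V' E' a" using gp_mono_V[OF a(1)] .
  show "gpath V' E' b" using gp_mono_K[OF act_comp[OF K] b(1)] .
  have "set a \<subseteq> V" "set b \<subseteq> VK K" using a(1) b(1) unfolding gpath_def by auto
  then show "set a \<inter> set b = {}" using VK_V[OF act_comp[OF K]] by blast
  show "{last a, hd b} \<in> E'" using conn_edge[OF K] a(2) b(2) by simp
qed

lemma TL2: assumes K: "act K" and y: "y \<in> VK K"
  shows "tle' x y \<longleftrightarrow> (x \<in> V \<and> tle x (tt K)) \<or> (x \<in> VK K \<and> tleK K x y)"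
proof
  have Kc: "K \<in> comps" using act_comp[OF K] .
  assume "tle' x y"
  then obtain p where p: "gpath V' E' p" "hd p = r" "last p = y" "x \<in> set p" unfolding tree_le_def by blast
  have hp: "hd p \<notin> VK K" using p(2) T_tree(2) VK_notV[OF Kc] by blast
  obtain A B where AB: "p = A @ B" "A \<noteq> []" "B \<noteq> []" "set A \<inter> VK K = {}" "set B \<subseteq> VK K" "last A = tt K" "hd B = rK K"
    using gate_split[of E' "VK K" "rK K" "tt K", OF gateK'[OF K] rK_VK[OF K] p(1) hp] p(3) y by blast
  have gA: "gpath V' E' A" using gpath_prefix[of V' E' A B] p(1) AB by simp
  have gB: "gpath V' E' B" using gpath_suffix[of V' E' A B] p(1) AB by simp
  have hA: "hd A = r" using p(2) AB by simp
  have sA: "set A \<subseteq> V" using stayV[OF gA] hA T_tree(2) AB(6) tt_V[OF Kc] by simp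
  have gA': "gpath V E A" using gp_V[OF gA sA] .
  have gB': "gpath (VK K) (EK K) B" using gp_K[OF K gB AB(5)] .
  have lB: "last B = y" using p(3) AB by simp
  have "x \<in> set A \<or> x \<in> set B" using p(4) AB(1) by simp
  then show "(x \<in> V \<and> tle x (tt K)) \<or> (x \<in> VK K \<and> tleK K x y)"
  proof
    assume "x \<in> set A"
    then have "x \<in> V \<and> tle x (tt K)" using gA' hA AB(6) sA unfolding tree_le_def by blast
    then show ?thesis by blast
  next
    assume "x \<in> set B"
    then have "x \<in> VK K \<and> tleK K x y" using gB' AB(7) lB AB(5) unfolding tree_le_def by blast
    then show ?thesis by blast
  qed
next
  have Kc: "K \<in> comps" using act_comp[OF K] .
  have tV: "tt K \<in> V" using tt_V[OF Kc] .
  define a where "a = rootpath V E r (tt K)"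
  have a: "gpath V E a" "hd a = r" "last a = tt K" using rootpath[OF T_tree(1,2) tV] unfolding a_def by auto
  assume "(x \<in> V \<and> tle x (tt K)) \<or> (x \<in> VK K \<and> tleK K x y)"
  then show "tle' x y"
  proof
    assume xa: "x \<in> V \<and> tle x (tt K)"
    then have xin: "x \<in> set a" using tree_le_rp[OF T_tree(1,2), of x "tt K"] unfolding a_def by simp
    obtain b where b: "gpath (VK K) (EK K) b" "hd b = rK K" "last b = y"
      using TK_tree[OF K] rK_VK[OF K] y unfolding is_tree_def by blast
    have g: "gpath V' E' (a @ b)" using glue[OF K a(1,3) b(1,2)] .
    have "hd (a @ b) = r" "last (a @ b) = y" using a b g unfolding gpath_def by auto
    then show ?thesis using g xin unfolding tree_le_def by (intro exI[of _ "a @ b"]) simp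
  next
    assume xb: "x \<in> VK K \<and> tleK K x y"
    then obtain b where b: "gpath (VK K) (EK K) b" "hd b = rK K" "last b = y" "x \<in> set b"
      unfolding tree_le_def by blast
    have g: "gpath V' E' (a @ b)" using glue[OF K a(1,3) b(1,2)] .
    have "hd (a @ b) = r" "last (a @ b) = y" using a b g unfolding gpath_def by auto
    then show ?thesis using g b(4) unfolding tree_le_def by (intro exI[of _ "a @ b"]) simp
  qed
qed

lemma TL3: "K \<in> comps \<Longrightarrow> x \<in> VK K \<Longrightarrow> y \<in> V \<Longrightarrow> \<not> tle' x y"
  using TL1' VK_notV by blast

lemma down_V: assumes u: "u \<in> V" shows "down_open V' E' r u = down_open V E r u"
  unfolding down_open_def using TL1'[OF _ u] TL1 V_sub by blast

lemma down_K: assumes K: "act K" and u: "u \<in> VK K"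
  shows "down_open V' E' r u \<subseteq> V \<union> down_open (VK K) (EK K) (rK K) u"
  unfolding down_open_def using TL2[OF K u] by blast

end



context P63 begin

lemma pathT: "x \<in> V \<Longrightarrow> y \<in> V \<Longrightarrow> \<exists>p. gpath V E p \<and> hd p = x \<and> last p = y"
  using T_tree(1) unfolding is_tree_def by blast

lemma pathK: "act K \<Longrightarrow> x \<in> VK K \<Longrightarrow> y \<in> VK K \<Longrightarrow> \<exists>p. gpath (VK K) (EK K) p \<and> hd p = x \<and> last p = y"
  using TK_tree[of K] unfolding is_tree_def by blast

lemma path_VK: assumes K: "act K" and x: "x \<in> V" and y: "y \<in> VK K"
  shows "\<exists>p. gpath V' E' p \<and> hd p = x \<and> last p = y"
proof -
  obtain a where a: "gpath V E a" "hd a = x" "last a = tt K" using pathT[OF x tt_V[OF act_comp[OF K]]] by blast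
  obtain b where b: "gpath (VK K) (EK K) b" "hd b = rK K" "last b = y" using pathK[OF K rK_VK[OF K] y] by blast
  have g: "gpath V' E' (a @ b)" using glue[OF K a(1,3) b(1,2)] .
  have "hd (a @ b) = x" "last (a @ b) = y" using a b unfolding gpath_def by auto
  then show ?thesis using g by blast
qed

lemma connected': assumes x: "x \<in> V'" and y: "y \<in> V'" shows "\<exists>p. gpath V' E' p \<and> hd p = x \<and> last p = y"
proof -
  have rv: "\<exists>p. gpath V' E' p \<and> hd p = x \<and> last p = y" if "gpath V' E' q" "hd q = y" "last q = x" for q
  proof -
    have "gpath V' E' (rev q)" using gpath_rev that(1) .
    moreover have "hd (rev q) = x" "last (rev q) = y" using that by (auto simp: hd_rev last_rev)
    ultimately show ?thesis by blast
  qed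
  from V'_cases[OF x] V'_cases[OF y] show ?thesis
  proof (elim disjE exE conjE)
    assume "x \<in> V" "y \<in> V"
    then show ?thesis using pathT gp_mono_V by blast
  next
    fix K assume "x \<in> V" "act K" "y \<in> VK K"
    then show ?thesis using path_VK by blast
  next
    fix K assume "act K" "x \<in> VK K" "y \<in> V"
    then obtain q where "gpath V' E' q" "hd q = y" "last q = x" using path_VK by blast
    then show ?thesis using rv by blast
  next
    fix K K' assume K: "act K" and xK: "x \<in> VK K" and K': "act K'" and yK: "y \<in> VK K'"
    show ?thesis
    proof (cases "K = K'")
      case True
      then show ?thesis using pathK[OF K xK] yK gp_mono_K[OF act_comp[OF K]] by blast
    next
      case False
      obtain b1 where b1: "gpath (VK K) (EK K) b1" "hd b1 = x" "last b1 = rK K" using pathK[OF K xK rK_VK[OF K]] by blast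
      obtain a where a: "gpath V E a" "hd a = tt K" "last a = tt K'"
        using pathT[OF tt_V[OF act_comp[OF K]] tt_V[OF act_comp[OF K']]] by blast
      obtain b2 where b2: "gpath (VK K') (EK K') b2" "hd b2 = rK K'" "last b2 = y" using pathK[OF K' rK_VK[OF K'] yK] by blast
      have g2: "gpath V' E' (a @ b2)" using glue[OF K' a(1,3) b2(1,2)] .
      have s: "set b1 \<subseteq> VK K" "set a \<subseteq> V" "set b2 \<subseteq> VK K'" using a b1 b2 unfolding gpath_def by auto
      have d1: "VK K \<inter> V = {}" using VK_V[OF act_comp[OF K]] .
      have d2: "VK K \<inter> VK K' = {}" using VK_disj[OF act_comp[OF K] act_comp[OF K']] False by blast
      have g: "gpath V' E' (b1 @ (a @ b2))"
      proof (rule gpath_appendI)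
        show "gpath V' E' b1" using gp_mono_K[OF act_comp[OF K] b1(1)] .
        show "gpath V' E' (a @ b2)" by (rule g2)
        show "set b1 \<inter> set (a @ b2) = {}" using s d1 d2 by auto
        have "hd (a @ b2) = tt K" using a by (auto simp: gpath_def)
        then show "{last b1, hd (a @ b2)} \<in> E'" using conn_edge[OF K] b1(3) by (simp add: insert_commute)
      qed
      have "hd (b1 @ (a @ b2)) = x" "last (b1 @ (a @ b2)) = y" using a b1 b2 unfolding gpath_def by auto
      then show ?thesis using g by blast
    qed
  qed
qed

lemma gcycle_rev: "gcycle A B c \<Longrightarrow> gcycle A B (rev c)"
  unfolding gcycle_def using gpath_rev
  by (metis gpath_def hd_rev last_rev length_rev insert_commute)

lemma cyc_side: assumes c: "gcycle V' E' c" and K: "act K" and h: "hd c \<in> VK K" and l: "last c \<notin> VK K"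
  shows False
proof -
  have gc: "gpath V' E' c" "length c \<ge> 3" "{last c, hd c} \<in> E'" using c unfolding gcycle_def by auto
  have "{hd c, last c} \<in> E'" using gc(3) by (simp add: insert_commute)
  then have hl: "hd c = rK K" "last c = tt K" using gateK'[OF K _ h l] by auto
  obtain c' where cc: "c = hd c # c'" using gc(1) unfolding gpath_def by (cases c) auto
  have lenc: "length c = Suc (length c')" using cc by (metis length_Cons)
  have c'ne: "c' \<noteq> []" using gc(2) lenc by auto
  have gc': "gpath V' E' c'" using gpath_suffix[of V' E' "[hd c]" c'] gc(1) cc c'ne by simp
  have lc': "last c' = tt K" using hl(2) cc c'ne by (metis last_ConsR)
  have nd: "hd c \<notin> set c'" using gc(1) cc unfolding gpath_def by (metis distinct.simps(2))
  have e: "{hd c, hd c'} \<in> E'" using gc(1) cc c'ne unfolding gpath_walk by (metis walk_Cons)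
  show False
  proof (cases "hd c' \<in> VK K")
    case True
    have "last c' \<notin> VK K" using l lc' hl by simp
    then have "rK K \<in> set c'" using gate_gpath(4)[of E' "VK K" "rK K" "tt K", OF gateK'[OF K] gc' True] by blast
    then show False using nd hl by simp
  next
    case False
    then have "hd c' = tt K" using gateK'[OF K e h] by simp
    then have "c' = [hd c']" using distinct_hd_last[of c'] gc' c'ne lc' unfolding gpath_def by simp
    then have "length c' = 1" by (metis One_nat_def length_Cons list.size(3))
    then show False using gc(2) lenc by simp
  qed
qed

lemma cyc_dich: assumes c: "gcycle V' E' c" and K: "act K" shows "set c \<subseteq> VK K \<or> set c \<inter> VK K = {}"
proof -
  have gc: "gpath V' E' c" using c unfolding gcycle_def by auto
  have G: "\<And>x y. {x, y} \<in> E' \<Longrightarrow> x \<in> VK K \<Longrightarrow> y \<notin> VK K \<Longrightarrow> x = rK K \<and> y = tt K" using gateK'[OF K] by blast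
  show ?thesis
  proof (cases "hd c \<in> VK K")
    case h: True
    show ?thesis
    proof (cases "last c \<in> VK K")
      case True then show ?thesis using gate_gpath(1)[OF G gc h] by blast
    next
      case False then show ?thesis using cyc_side[OF c K h] by blast
    qed
  next
    case h: False
    show ?thesis
    proof (cases "last c \<in> VK K")
      case True
      have "gcycle V' E' (rev c)" using gcycle_rev[OF c] .
      moreover have "hd (rev c) \<in> VK K" "last (rev c) \<notin> VK K" using True h gc unfolding gpath_def by (auto simp: hd_rev last_rev)
      ultimately show ?thesis using cyc_side[OF _ K] by blast
    next
      case False then show ?thesis using gate_gpath(2)[OF G gc h] by blast
    qed
  qed
qed

lemma no_cycle': "\<not> gcycle V' E' c"
proof
  assume c: "gcycle V' E' c"
  have gc: "gpath V' E' c" "length c \<ge> 3" "{last c, hd c} \<in> E'" using c unfolding gcycle_def by auto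
  have hl: "hd c \<in> set c" "last c \<in> set c" using gc(1) unfolding gpath_def by auto
  show False
  proof (cases "\<exists>K. act K \<and> set c \<subseteq> VK K")
    case True
    then obtain K where K: "act K" "set c \<subseteq> VK K" by blast
    have "gpath (VK K) (EK K) c" using gp_K[OF K(1) gc(1) K(2)] .
    moreover have "{last c, hd c} \<in> EK K" using edgeK[OF K(1) gc(3)] hl K(2) by blast
    ultimately have "gcycle (VK K) (EK K) c" using gc(2) unfolding gcycle_def by blast
    then show False using TK_tree[OF K(1)] unfolding is_tree_def by blast
  next
    case False
    have "set c \<subseteq> V"
    proof
      fix z assume z: "z \<in> set c"
      then have "z \<in> V'" using gc(1) unfolding gpath_def by blast
      then show "z \<in> V"
      proof (rule V'_cases[elim_format], elim disjE exE conjE)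
        fix K assume K: "act K" and zK: "z \<in> VK K"
        from cyc_dich[OF c K] show ?thesis using False K z zK by blast
      qed
    qed
    then have "gpath V E c" "{last c, hd c} \<in> E" using gp_V[OF gc(1)] edgeV[OF gc(3)] hl by auto
    then have "gcycle V E c" using gc(2) unfolding gcycle_def by blast
    then show False using T_tree(1) unfolding is_tree_def by blast
  qed
qed

lemma ugraph': "ugraph V' E'"
  unfolding ugraph_def
proof
  fix e assume e: "e \<in> E'"
  from E'_cases[OF e] show "\<exists>x y. x \<noteq> y \<and> x \<in> V' \<and> y \<in> V' \<and> e = {x, y}"
  proof (elim disjE)
    assume "e \<in> E" then show ?thesis using E_sub V_sub by blast
  next
    assume "\<exists>K\<in>comps. e \<in> EK K"
    then obtain K where K: "K \<in> comps" "e \<in> EK K" by blast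
    then have "act K" using notact[OF K(1)] by auto
    then have "ugraph (VK K) (EK K)" using TK_tree[of K] unfolding is_tree_def by simp
    then have "\<exists>x y. x \<noteq> y \<and> x \<in> VK K \<and> y \<in> VK K \<and> e = {x, y}" using K(2) unfolding ugraph_def by simp
    then show ?thesis using VK_sub'[OF K(1)] by blast
  next
    assume "\<exists>K. act K \<and> e = {tt K, rK K}"
    then obtain K where K: "act K" "e = {tt K, rK K}" by blast
    have Kc: "K \<in> comps" using act_comp[OF K(1)] .
    have "tt K \<noteq> rK K" "tt K \<in> V'" "rK K \<in> V'"
      using tt_V[OF Kc] VK_notV[OF Kc rK_VK[OF K(1)]] rK_VK[OF K(1)] V_sub VK_sub'[OF Kc] by auto
    then show ?thesis using K(2) by blast
  qed
qed

lemma tree': "is_tree V' E'" "rooted_tree V' E' r"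
proof -
  show "is_tree V' E'" unfolding is_tree_def using ugraph' connected' no_cycle' T_tree(2) V_sub by blast
  then show "rooted_tree V' E' r" unfolding rooted_tree_def using T_tree(2) V_sub by blast
qed

end



context P63 begin

lemma CC_pair: "C \<in> CC \<Longrightarrow> u \<in> C \<Longrightarrow> v \<in> C \<Longrightarrow> \<exists>X\<in>F. X \<subseteq> C \<and> u \<in> X \<and> v \<in> X"
  unfolding conn_sets_def by blast

lemma lift: "act K \<Longrightarrow> z \<in> VK K \<Longrightarrow> m \<in> V \<Longrightarrow> tle m (tt K) \<Longrightarrow> tle' m z"
  using TL2 by blast

lemma cond1_mixed: assumes K: "act K" and C: "C \<in> CC" and u: "u \<in> C" "u \<in> VK K" and v: "v \<in> C" "v \<in> V"
  shows "\<exists>w\<in>C. tle' w u \<and> tle' w v"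
proof -
  have Kc: "K \<in> comps" using act_comp[OF K] .
  obtain X where X: "X \<in> F" "X \<subseteq> C" "u \<in> X" "v \<in> X" using CC_pair[OF C u(1) v(1)] by blast
  have uK: "u \<in> K" using VK_sub[OF Kc] u(2) by blast
  have vK: "v \<notin> K" using K_props[OF Kc] v(2) by blast
  obtain m where m: "ismin X m" "tle m (tt K)" using cross_min_below[OF Kc X(1)] X uK vK by blast
  have mm: "m \<in> X" "m \<in> V" "tle m v" using m(1) X(4) v(2) unfolding ismin_def by auto
  show ?thesis using lift[OF K u(2) mm(2) m(2)] TL1[OF mm(3)] mm(1) X(2) by blast
qed

lemma cond1_same: assumes K: "act K" and C: "C \<in> CC" and u: "u \<in> C" "u \<in> VK K" and v: "v \<in> C" "v \<in> VK K"
  and n: "\<not> tle' u v" "\<not> tle' v u"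
  shows "\<exists>w\<in>C. tle' w u \<and> tle' w v"
proof -
  have Kc: "K \<in> comps" using act_comp[OF K] .
  obtain X where X: "X \<in> F" "X \<subseteq> C" "u \<in> X" "v \<in> X" using CC_pair[OF C u(1) v(1)] by blast
  have uK: "u \<in> K" using VK_sub[OF Kc] u(2) by blast
  show ?thesis
  proof (cases "X \<subseteq> K")
    case True
    have XC: "X \<in> CC \<inter> Pow K" using conn_F[OF conn X(1)] True by blast
    have n1: "\<not> tleK K u v" using n(1) TL2[OF K v(2)] u(2) by blast
    have n2: "\<not> tleK K v u" using n(2) TL2[OF K u(2)] v(2) by blast
    obtain w where w: "w \<in> X" "tleK K w u" "tleK K w v" using TK_cond1[OF K XC X(3,4) u(2) v(2) n1 n2] by blast
    have wK: "w \<in> VK K" using tree_le_V[OF w(2)] by simp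
    have "tle' w u" using TL2[OF K u(2)] w(2) wK by blast
    moreover have "tle' w v" using TL2[OF K v(2)] w(3) wK by blast
    ultimately show ?thesis using w(1) X(2) by blast
  next
    case False
    obtain m where m: "ismin X m" "tle m (tt K)" using cross_min_below[OF Kc X(1)] X uK False by blast
    have mm: "m \<in> X" "m \<in> V" using m(1) unfolding ismin_def by auto
    show ?thesis using lift[OF K u(2) mm(2) m(2)] lift[OF K v(2) mm(2) m(2)] mm(1) X(2) by blast
  qed
qed

lemma cond1_diff: assumes K: "act K" and K': "act K'" and ne: "K \<noteq> K'" and C: "C \<in> CC"
  and u: "u \<in> C" "u \<in> VK K" and v: "v \<in> C" "v \<in> VK K'"
  shows "\<exists>w\<in>C. tle' w u \<and> tle' w v"
proof -
  have Kc: "K \<in> comps" using act_comp[OF K] .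
  have K'c: "K' \<in> comps" using act_comp[OF K'] .
  obtain X where X: "X \<in> F" "X \<subseteq> C" "u \<in> X" "v \<in> X" using CC_pair[OF C u(1) v(1)] by blast
  have uK: "u \<in> K" using VK_sub[OF Kc] u(2) by blast
  have vK': "v \<in> K'" using VK_sub[OF K'c] v(2) by blast
  have vK: "v \<notin> K" using comp_disj'[OF Kc K'c _ vK'] ne by blast
  have uK': "u \<notin> K'" using comp_disj'[OF Kc K'c uK] ne by blast
  obtain m where m: "ismin X m" "tle m (tt K)" using cross_min_below[OF Kc X(1)] X uK vK by blast
  obtain m' where m': "ismin X m'" "tle m' (tt K')" using cross_min_below[OF K'c X(1)] X vK' uK' by blast
  have "m = m'" using min_unique[OF m(1) m'(1)] .
  have mm: "m \<in> X" "m \<in> V" using m(1) unfolding ismin_def by auto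
  show ?thesis using lift[OF K u(2) mm(2) m(2)] lift[OF K' v(2) mm(2)] m'(2) \<open>m = m'\<close> mm(1) X(2) by blast
qed

lemma cond1': assumes C: "C \<in> CC" and u: "u \<in> C" "u \<in> V'" and v: "v \<in> C" "v \<in> V'"
  and n: "\<not> tle' u v" "\<not> tle' v u"
  shows "\<exists>w\<in>C. tle' w u \<and> tle' w v"
proof -
  from V'_cases[OF u(2)] V'_cases[OF v(2)] show ?thesis
  proof (elim disjE exE conjE)
    assume uV: "u \<in> V" and vV: "v \<in> V"
    have "\<not> tle u v" "\<not> tle v u" using n TL1 by blast+
    then obtain w where w: "w \<in> C" "tle w u" "tle w v" using T_cond1[OF C u(1) v(1) uV vV] by blast
    then show ?thesis using TL1 by blast
  next
    fix K assume "u \<in> V" "act K" "v \<in> VK K"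
    then show ?thesis using cond1_mixed[OF _ C v(1) _ u(1)] by blast
  next
    fix K assume "act K" "u \<in> VK K" "v \<in> V"
    then show ?thesis using cond1_mixed[OF _ C u(1) _ v(1)] by blast
  next
    fix K K' assume K: "act K" "u \<in> VK K" and K': "act K'" "v \<in> VK K'"
    show ?thesis
    proof (cases "K = K'")
      case True then show ?thesis using cond1_same[OF K(1) C u(1) K(2) v(1) _ n] K' by blast
    next
      case False then show ?thesis using cond1_diff[OF K(1) K'(1) False C u(1) K(2) v(1) K'(2)] by blast
    qed
  qed
qed

lemma cond2': assumes a: "tle' u v" shows "\<exists>C\<in>CC. u \<in> C \<and> v \<in> C \<and> C \<inter> down_open V' E' r u = {}"
proof -
  have v: "v \<in> V'" using tree_le_V[OF a] by simp
  from V'_cases[OF v] show ?thesis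
  proof (elim disjE exE conjE)
    assume vV: "v \<in> V"
    have uu: "u \<in> V" "tle u v" using TL1'[OF a vV] by auto
    obtain C where C: "C \<in> CC" "u \<in> C" "v \<in> C" "C \<inter> down_open V E r u = {}" using T_cond2[OF uu(2)] by blast
    then show ?thesis using down_V[OF uu(1)] by auto
  next
    fix K assume K: "act K" and vK: "v \<in> VK K"
    have Kc: "K \<in> comps" using act_comp[OF K] .
    from TL2[OF K vK, of u] a have "(u \<in> V \<and> tle u (tt K)) \<or> (u \<in> VK K \<and> tleK K u v)" by simp
    then show ?thesis
    proof
      assume uu: "u \<in> V \<and> tle u (tt K)"
      obtain C1 where C1: "C1 \<in> CC" "u \<in> C1" "tt K \<in> C1" "C1 \<inter> down_open V E r u = {}"
        using T_cond2[of u "tt K"] uu by blast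
      obtain X where X: "X \<in> cross K" "ismin X (tt K)" using tt[OF Kc] unfolding goodt_def by blast
      have XF: "X \<in> F" "X \<inter> K \<noteq> {}" using X(1) unfolding cross_def by auto
      have KC: "K \<in> CC" using K_props[OF Kc] by blast
      have C2: "K \<union> X \<in> CC" using conn_Un[OF conn KC conn_F[OF conn XF(1)]] XF(2) by blast
      have tX: "tt K \<in> X" using X(2) unfolding ismin_def by blast
      have C: "C1 \<union> (K \<union> X) \<in> CC" using conn_Un[OF conn C1(1) C2] C1(3) tX by blast
      have vK': "v \<in> K" using VK_sub[OF Kc] vK by blast
      have "(C1 \<union> (K \<union> X)) \<inter> down_open V E r u = {}"
      proof -
        have "K \<inter> down_open V E r u = {}" using K_props[OF Kc] unfolding down_open_def by blast
        moreover have "X \<inter> down_open V E r u = {}"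
        proof (rule ccontr)
          assume "X \<inter> down_open V E r u \<noteq> {}"
          then obtain z where z: "z \<in> X" "z \<in> V" "tle z u" "z \<noteq> u" unfolding down_open_def by blast
          have "tle (tt K) z" using X(2) z unfolding ismin_def by blast
          then have "tle u z" using tree_le_trans[OF T_tree(1,2)] uu by blast
          then show False using tree_le_antisym[OF T_tree(1,2)] z(3,4) by blast
        qed
        ultimately show ?thesis using C1(4) by blast
      qed
      then show ?thesis using C C1(2) vK' down_V uu by auto
    next
      assume uu: "u \<in> VK K \<and> tleK K u v"
      obtain C where C: "C \<in> CC \<inter> Pow K" "u \<in> C" "v \<in> C" "C \<inter> down_open (VK K) (EK K) (rK K) u = {}"
        using TK_cond2[OF K] uu by blast
      have "C \<inter> V = {}" using C(1) K_props[OF Kc] by blast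
      then have "C \<inter> down_open V' E' r u = {}" using down_K[OF K] uu C(4) by blast
      then show ?thesis using C by blast
    qed
  qed
qed

end



context P63 begin

lemma ray_prefix: assumes R: "is_ray V' E' R"
  shows "gpath V' E' (map R [0..<Suc m])" "hd (map R [0..<Suc m]) = R 0" "last (map R [0..<Suc m]) = R m"
    "set (map R [0..<Suc m]) = R ` {0..m}"
proof -
  have i: "inj R" "range R \<subseteq> V'" "\<And>n. {R n, R (Suc n)} \<in> E'" using R unfolding is_ray_def by auto
  have d: "distinct (map R [0..<Suc m])" using i(1) unfolding distinct_map by (metis distinct_upt inj_on_subset subset_UNIV)
  show "gpath V' E' (map R [0..<Suc m])" unfolding gpath_def
    using d i(2,3) by (auto simp del: upt_Suc simp: nth_append)
  show "hd (map R [0..<Suc m]) = R 0" by (simp add: hd_map del: upt_Suc)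
  show "last (map R [0..<Suc m]) = R m" by (simp add: last_map del: upt_Suc)
  show "set (map R [0..<Suc m]) = R ` {0..m}" by (auto simp del: upt_Suc)
qed

lemma ray_stay: assumes R: "is_ray V' E' R" and K: "act K" and h: "R 0 \<notin> VK K" and n: "R n \<in> VK K" and nm: "n \<le> m"
  shows "R m \<in> VK K"
proof (rule ccontr)
  assume l: "R m \<notin> VK K"
  have G: "\<And>x y. {x, y} \<in> E' \<Longrightarrow> x \<in> VK K \<Longrightarrow> y \<notin> VK K \<Longrightarrow> x = rK K \<and> y = tt K" using gateK'[OF K] by blast
  have "set (map R [0..<Suc m]) \<inter> VK K = {}"
    using gate_gpath(2)[OF G ray_prefix(1)[OF R, of m]] ray_prefix(2,3)[OF R, of m] h l by simp
  moreover have "R n \<in> set (map R [0..<Suc m])" using ray_prefix(4)[OF R, of m] nm by auto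
  ultimately show False using n by blast
qed

lemma ray_shift: "is_ray A B R \<Longrightarrow> is_ray A B (\<lambda>i. R (j + i))"
  unfolding is_ray_def inj_def by (auto, metis add_left_cancel)

lemma ray_V: assumes R: "is_ray V' E' R" and a: "\<forall>n. R n \<in> V" shows "is_ray V E R"
proof -
  have "{R n, R (Suc n)} \<in> E" for n using edgeV[of "R n" "R (Suc n)"] R a unfolding is_ray_def by simp
  then show ?thesis using R a unfolding is_ray_def by auto
qed

lemma ray_K: assumes K: "act K" and R: "is_ray V' E' R" and a: "\<forall>n. R n \<in> VK K" shows "is_ray (VK K) (EK K) R"
proof -
  have "{R n, R (Suc n)} \<in> EK K" for n using edgeK[OF K, of "R n" "R (Suc n)"] R a unfolding is_ray_def by simp
  then show ?thesis using R a unfolding is_ray_def by auto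
qed

lemma ray_from_V: assumes R: "is_ray V' E' R" and h: "R 0 \<in> V"
  shows "(\<forall>n. R n \<in> V) \<or> (\<exists>K j. act K \<and> R j = rK K \<and> (\<forall>m\<ge>j. R m \<in> VK K))"
proof (cases "\<forall>n. R n \<in> V")
  case True then show ?thesis by blast
next
  case False
  then obtain n where n: "R n \<notin> V" by blast
  have "R n \<in> V'" using R unfolding is_ray_def by blast
  then obtain K where K: "act K" "R n \<in> VK K" using V'_cases n by blast
  have Kc: "K \<in> comps" using act_comp[OF K(1)] .
  define j where "j = (LEAST j. R j \<in> VK K)"
  have j: "R j \<in> VK K" unfolding j_def using LeastI[of "\<lambda>j. R j \<in> VK K"] K(2) by blast
  have h': "R 0 \<notin> VK K" using h VK_notV[OF Kc] by blast
  have j0: "j \<noteq> 0" using j h' by (metis)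
  have pj: "R (j - 1) \<notin> VK K" unfolding j_def using not_less_Least[of "j - 1" "\<lambda>j. R j \<in> VK K"] j0 j_def by simp
  have e: "{R (j - 1), R j} \<in> E'" using R j0 unfolding is_ray_def by (metis Suc_pred' not_gr_zero)
  have "R j = rK K" using gateK'[OF K(1) _ j pj] e by (simp add: insert_commute)
  moreover have "\<forall>m\<ge>j. R m \<in> VK K" using ray_stay[OF R K(1) h' j] by blast
  ultimately show ?thesis using K(1) by blast
qed

lemma ray_leaveK: assumes R: "is_ray V' E' R" and K: "act K" and h: "R 0 \<in> VK K"
  shows "(\<forall>n. R n \<in> VK K) \<or> (\<exists>j. R j \<in> V)"
proof (cases "\<forall>n. R n \<in> VK K")
  case True then show ?thesis by blast
next
  case False
  then obtain n where n: "R n \<notin> VK K" by blast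
  have Kc: "K \<in> comps" using act_comp[OF K] .
  define j where "j = (LEAST j. R j \<notin> VK K)"
  have j: "R j \<notin> VK K" unfolding j_def using LeastI[of "\<lambda>j. R j \<notin> VK K"] n by blast
  have j0: "j \<noteq> 0" using j h by (metis)
  have pj: "R (j - 1) \<in> VK K" unfolding j_def using not_less_Least[of "j - 1" "\<lambda>j. R j \<notin> VK K"] j0 j_def by simp
  have e: "{R (j - 1), R j} \<in> E'" using R j0 unfolding is_ray_def by (metis Suc_pred' not_gr_zero)
  have "R j = tt K" using gateK'[OF K e pj j] by simp
  then have "R j \<in> V" using tt_V[OF Kc] by simp
  then show ?thesis by blast
qed

lemma no_ray_from_V: assumes rl: "rayless V E" "\<forall>K\<in>comps. rayless (VK K) (EK K)"
  and R: "is_ray V' E' R" and h: "R 0 \<in> V" shows False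
proof -
  from ray_from_V[OF R h] show False
  proof
    assume "\<forall>n. R n \<in> V"
    then have "is_ray V E R" using ray_V[OF R] by blast
    then show False using rl(1) unfolding rayless_def by blast
  next
    assume "\<exists>K j. act K \<and> R j = rK K \<and> (\<forall>m\<ge>j. R m \<in> VK K)"
    then obtain K j where K: "act K" "\<forall>m\<ge>j. R m \<in> VK K" by blast
    have "is_ray V' E' (\<lambda>i. R (j + i))" using ray_shift[OF R] .
    then have "is_ray (VK K) (EK K) (\<lambda>i. R (j + i))" using ray_K[OF K(1)] K(2) by simp
    then show False using rl(2) act_comp[OF K(1)] unfolding rayless_def by blast
  qed
qed

lemma rayless': assumes rl: "rayless V E" "\<forall>K\<in>comps. rayless (VK K) (EK K)" shows "rayless V' E'"
  unfolding rayless_def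
proof
  assume "\<exists>R. is_ray V' E' R"
  then obtain R where R: "is_ray V' E' R" by blast
  have "R 0 \<in> V'" using R unfolding is_ray_def by blast
  from V'_cases[OF this] show False
  proof (elim disjE exE conjE)
    assume "R 0 \<in> V" then show False using no_ray_from_V[OF rl R] by blast
  next
    fix K assume K: "act K" "R 0 \<in> VK K"
    from ray_leaveK[OF R K] show False
    proof
      assume "\<forall>n. R n \<in> VK K"
      then have "is_ray (VK K) (EK K) R" using ray_K[OF K(1) R] by blast
      then show False using rl(2) act_comp[OF K(1)] unfolding rayless_def by blast
    next
      assume "\<exists>j. R j \<in> V"
      then obtain j where j: "R j \<in> V" by blast
      show False using no_ray_from_V[OF rl ray_shift[OF R, of j]] j by simp
    qed
  qed
qed

lemma necklace_mono: "necklace (CC \<inter> Pow K) N \<Longrightarrow> necklace CC N"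
  unfolding necklace_def by blast

lemma rays': assumes R: "rooted_ray V' E' r R" shows "\<exists>N. necklace CC N \<and> finite {n. R n \<notin> N}"
proof -
  have R1: "is_ray V' E' R" "R 0 = r" using R unfolding rooted_ray_def by auto
  have "R 0 \<in> V" using R1(2) T_tree(2) by simp
  from ray_from_V[OF R1(1) this] show ?thesis
  proof (elim disjE exE conjE)
    assume "\<forall>n. R n \<in> V"
    then have "rooted_ray V E r R" using ray_V[OF R1(1)] R1(2) unfolding rooted_ray_def by blast
    then show ?thesis using T_rays by blast
  next
    fix K j assume K: "act K" "R j = rK K" "\<forall>m\<ge>j. R m \<in> VK K"
    have "is_ray V' E' (\<lambda>i. R (j + i))" using ray_shift[OF R1(1)] .
    then have "is_ray (VK K) (EK K) (\<lambda>i. R (j + i))" using ray_K[OF K(1)] K(3) by simp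
    then have "rooted_ray (VK K) (EK K) (rK K) (\<lambda>i. R (j + i))" using K(2) unfolding rooted_ray_def by simp
    then obtain N where N: "necklace (CC \<inter> Pow K) N" "finite {i. R (j + i) \<notin> N}" using TK_rays[OF K(1)] by blast
    have "{n. R n \<notin> N} \<subseteq> {..<j} \<union> (\<lambda>i. j + i) ` {i. R (j + i) \<notin> N}"
    proof
      fix n assume n: "n \<in> {n. R n \<notin> N}"
      show "n \<in> {..<j} \<union> (\<lambda>i. j + i) ` {i. R (j + i) \<notin> N}"
      proof (cases "n < j")
        case True then show ?thesis by simp
      next
        case False
        then have "n = j + (n - j)" by simp
        then show ?thesis using n by (metis (mono_tags, lifting) UnI2 image_eqI mem_Collect_eq)
      qed
    qed
    moreover have "finite ({..<j} \<union> (\<lambda>i. j + i) ` {i. R (j + i) \<notin> N})" using N(2) by simp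
    ultimately have "finite {n. R n \<notin> N}" by (rule finite_subset)
    then show ?thesis using necklace_mono[OF N(1)] by blast
  qed
qed

end



context P63 begin

lemma main: "normal_tree S CC V' E' r \<and> V \<subseteq> V' \<and> E \<subseteq> E' \<and>
           V' - V = (\<Union>K\<in>comps. VK K) \<and>
           {e\<in>E'. e \<inter> V = {}} = (\<Union>K\<in>comps. EK K) \<and>
           ((rayless V E \<and> (\<forall>K\<in>comps. rayless (VK K) (EK K))) \<longrightarrow> rayless V' E')"
proof (intro conjI)
  have VS: "V' \<subseteq> S"
  proof
    fix x assume "x \<in> V'"
    then show "x \<in> S" unfolding V'_def
    proof (elim UnE UN_E)
      assume "x \<in> V" then show ?thesis using T_tree(3) by blast
    next
      fix K assume K: "K \<in> comps" "x \<in> VK K"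
      have "VK K \<subseteq> K" "K \<subseteq> S - V" using VK_sub[OF K(1)] K_props[OF K(1)] by auto
      then show ?thesis using K(2) by blast
    qed
  qed
  have c1: "\<forall>C\<in>CC. \<forall>u\<in>C \<inter> V'. \<forall>v\<in>C \<inter> V'. \<not> tle' u v \<and> \<not> tle' v u \<longrightarrow> (\<exists>w\<in>C. tle' w u \<and> tle' w v)"
  proof (intro ballI impI)
    fix C u v assume "C \<in> CC" "u \<in> C \<inter> V'" "v \<in> C \<inter> V'" "\<not> tle' u v \<and> \<not> tle' v u"
    then show "\<exists>w\<in>C. tle' w u \<and> tle' w v" using cond1'[of C u v] by simp
  qed
  have c2: "\<forall>u\<in>V'. \<forall>v\<in>V'. tle' u v \<longrightarrow> (\<exists>C\<in>CC. u \<in> C \<and> v \<in> C \<and> C \<inter> down_open V' E' r u = {})"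
  proof (intro ballI impI)
    fix u v assume "tle' u v"
    then show "\<exists>C\<in>CC. u \<in> C \<and> v \<in> C \<and> C \<inter> down_open V' E' r u = {}" by (rule cond2')
  qed
  have "weak_normal_tree S CC V' E' r" unfolding weak_normal_tree_def using tree'(2) VS c1 c2 by (intro conjI)
  moreover have "\<forall>R. rooted_ray V' E' r R \<longrightarrow> (\<exists>N. necklace CC N \<and> finite {n. R n \<notin> N})" using rays' by blast
  ultimately show "normal_tree S CC V' E' r" unfolding normal_tree_def by (intro conjI)
  show "V \<subseteq> V'" by (rule V_sub)
  show "E \<subseteq> E'" by (rule E_sub')
  show "V' - V = (\<Union>K\<in>comps. VK K)"
  proof
    show "V' - V \<subseteq> (\<Union>K\<in>comps. VK K)" unfolding V'_def by blast
    show "(\<Union>K\<in>comps. VK K) \<subseteq> V' - V"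
    proof
      fix x assume "x \<in> (\<Union>K\<in>comps. VK K)"
      then obtain K where K: "K \<in> comps" "x \<in> VK K" by blast
      then show "x \<in> V' - V" using VK_notV[OF K] VK_sub'[OF K(1)] by blast
    qed
  qed
  show "{e\<in>E'. e \<inter> V = {}} = (\<Union>K\<in>comps. EK K)"
  proof
    show "{e\<in>E'. e \<inter> V = {}} \<subseteq> (\<Union>K\<in>comps. EK K)"
    proof
      fix e assume e: "e \<in> {e\<in>E'. e \<inter> V = {}}"
      then have eE: "e \<in> E'" "e \<inter> V = {}" by auto
      from E'_cases[OF eE(1)] show "e \<in> (\<Union>K\<in>comps. EK K)"
      proof (elim disjE)
        assume "e \<in> E"
        then obtain x y where "x \<in> V" "e = {x, y}" using E_sub by blast
        then show ?thesis using eE(2) by blast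
      next
        assume "\<exists>K\<in>comps. e \<in> EK K" then show ?thesis by blast
      next
        assume "\<exists>K. act K \<and> e = {tt K, rK K}"
        then obtain K where K: "act K" "e = {tt K, rK K}" by blast
        then have "tt K \<in> e \<inter> V" using tt_V[OF act_comp[OF K(1)]] by simp
        then show ?thesis using eE(2) by blast
      qed
    qed
    show "(\<Union>K\<in>comps. EK K) \<subseteq> {e\<in>E'. e \<inter> V = {}}"
    proof
      fix e assume "e \<in> (\<Union>K\<in>comps. EK K)"
      then obtain K where K: "K \<in> comps" "e \<in> EK K" by blast
      have "e \<in> E'" using EK_sub'[OF K(1)] K(2) by blast
      moreover have "e \<inter> V = {}" using EK_sub[OF K] VK_V[OF K(1)] by (simp add: disjoint_iff subset_iff)
      ultimately show "e \<in> {e\<in>E'. e \<inter> V = {}}" by blast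
    qed
  qed
  show "(rayless V E \<and> (\<forall>K\<in>comps. rayless (VK K) (EK K))) \<longrightarrow> rayless V' E'"
  proof
    assume "rayless V E \<and> (\<forall>K\<in>comps. rayless (VK K) (EK K))"
    then show "rayless V' E'" using rayless'[of] by simp
  qed
qed

end

theorem proposition6p3:
  fixes S :: "'a set" and F :: "'a set set"
    and V :: "'a set" and E :: "'a set set" and r :: 'a
    and VK :: "'a set \<Rightarrow> 'a set" and EK :: "'a set \<Rightarrow> 'a set set" and rK :: "'a set \<Rightarrow> 'a"
  assumes conn: "connectoid S F"
    and S_conn: "S \<in> conn_sets S F"
    and T_normal: "normal_tree S (conn_sets S F) V E r"
    and adhesion: "\<forall>K\<in>components (conn_sets S F) (S - V).
                     finite_adhesion (conn_sets S F) S V K"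
    and TK_normal: "\<forall>K\<in>components (conn_sets S F) (S - V).
                     (VK K = {} \<and> EK K = {}) \<or>
                     normal_tree K (conn_sets S F \<inter> Pow K) (VK K) (EK K) (rK K)"
  shows "\<exists>V' E'. normal_tree S (conn_sets S F) V' E' r \<and> V \<subseteq> V' \<and> E \<subseteq> E' \<and>
           V' - V = (\<Union>K\<in>components (conn_sets S F) (S - V). VK K) \<and>
           {e\<in>E'. e \<inter> V = {}} = (\<Union>K\<in>components (conn_sets S F) (S - V). EK K) \<and>
           ((rayless V E \<and> (\<forall>K\<in>components (conn_sets S F) (S - V). rayless (VK K) (EK K)))
              \<longrightarrow> rayless V' E')"
proof -
  interpret P63 S F V E r VK EK rK
    using conn S_conn T_normal adhesion TK_normal by unfold_locales
  show ?thesis by (rule exI[of _ V'], rule exI[of _ E'], rule main)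
qed


end
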